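(* Let $k$ be any field and let $m,n\ge 1$. There exists a straight line program $\Gamma^{tR}$ of length $O(mn^2+n^3)$ which, on input the entries of an $m\times n$ matrix $A=(a_{ij})$ over $k$, has as its order-$n^2$ output the $n^2$ entries of the triangular reduced row echelon form of $A$. In particular, each entry of the triangular reduced row echelon form of $A$ is a constructible function of the $a_{ij}$ (an element of the ring generated from $k[a_{ij}]$ by ring operations and the quasi-inverse).
   Context: The quasi-inverse of a function $f$ is $\{f\}(p)=1/f(p)$ if $f(p)\neq0$ and $0$ otherwise. A straight line program on inputs $a_{-m'},\dots,a_{-1}$ (in tape cells $-m',\dots,-1$) is a finite list of instructions $\Gamma_0,\dots,\Gamma_{L-1}$; instruction $\Gamma_i$ writes into cell $i$ one of: $a_{i-j}+a_{i-k}$, $a_{i-j}-a_{i-k}$, $a_{i-j}\cdot a_{i-k}$, $\{a_{i-j}\}$, a constant $c\in k$, or a copy ("recall") of $a_{i-j}$, with $j,k$ positive integers. Its length is $L$, and its order-$d$ output is $(a_{L-d},\dots,a_{L-1})$. The triangular reduced row echelon form (tRREF) of an $m\times n$ matrix $A$ is the $n\times n$ matrix $R_A$ whose $j$-th row is nonzero if and only if the (usual) reduced row echelon form of $A$ has a pivot in column $j$, in which case the $j$-th row of $R_A$ is the row of the RREF of $A$ containing that pivot. Thus the RREF of $A$ has a pivot in column $j$ iff the $(j,j)$ entry of $R_A$ equals $1$ (and otherwise it is $0$). *)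

theory Defs
  imports "Jordan_Normal_Form.Gauss_Jordan_Elimination"
begin

definition qinv :: "'a::field \<Rightarrow> 'a" where
  "qinv x = (if x = 0 then 0 else 1 / x)"

text \<open>Instruction Gamma_i writing into cell i. The natural-number arguments
  are the offsets j, k: the operand a_(i-j) refers to cell i-j.\<close>
datatype 'a instr =
    Add nat nat | Sub nat nat | Mul nat nat | QInv nat | Const 'a | Recall nat

text \<open>The tape is represented as the list of all cells written so far,
  a_(-m'), ..., a_(-1), a_0, ..., a_(i-1); the cell i-j is then the
  element at position (length tape - j).\<close>
definition cell :: "'a list \<Rightarrow> nat \<Rightarrow> 'a" where
  "cell tape j = tape ! (length tape - j)"

fun eval_instr :: "'a::field instr \<Rightarrow> 'a list \<Rightarrow> 'a" where
  "eval_instr (Add j k) t = cell t j + cell t k"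
| "eval_instr (Sub j k) t = cell t j - cell t k"
| "eval_instr (Mul j k) t = cell t j * cell t k"
| "eval_instr (QInv j) t = qinv (cell t j)"
| "eval_instr (Const c) t = c"
| "eval_instr (Recall j) t = cell t j"

fun offsets :: "'a instr \<Rightarrow> nat set" where
  "offsets (Add j k) = {j, k}"
| "offsets (Sub j k) = {j, k}"
| "offsets (Mul j k) = {j, k}"
| "offsets (QInv j) = {j}"
| "offsets (Const c) = {}"
| "offsets (Recall j) = {j}"

text \<open>A program on m' inputs is well formed if every offset j used by
  instruction i is positive and refers to an existing cell (i - j >= -m').\<close>
definition valid_slp :: "nat \<Rightarrow> 'a instr list \<Rightarrow> bool" where
  "valid_slp m' prog \<longleftrightarrow>
     (\<forall>i < length prog. \<forall>j \<in> offsets (prog ! i). 1 \<le> j \<and> j \<le> m' + i)"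

definition run_slp :: "'a::field instr list \<Rightarrow> 'a list \<Rightarrow> 'a list" where
  "run_slp prog inputs = fold (\<lambda>ins t. t @ [eval_instr ins t]) prog inputs"

definition slp_output :: "'a::field instr list \<Rightarrow> nat \<Rightarrow> 'a list \<Rightarrow> 'a list" where
  "slp_output prog d inputs = (let t = run_slp prog inputs in drop (length t - d) t)"

definition entries :: "'a mat \<Rightarrow> 'a list" where
  "entries A = concat (map (\<lambda>i. map (\<lambda>j. A $$ (i, j)) [0..<dim_col A]) [0..<dim_row A])"

text \<open>The reduced row echelon form: the unique matrix in reduced row echelon
  form (JNF's row_echelon_form is the reduced one) that is row equivalent to A.\<close>
definition rref :: "'a::field mat \<Rightarrow> 'a mat" where
  "rref A = (THE R. R \<in> carrier_mat (dim_row A) (dim_col A) \<and> row_echelon_form R \<and>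
      (\<exists>P. P \<in> carrier_mat (dim_row A) (dim_row A) \<and> invertible_mat P \<and> R = P * A))"

definition pivot_at :: "'a::field mat \<Rightarrow> nat \<Rightarrow> nat \<Rightarrow> bool" where
  "pivot_at R i j \<longleftrightarrow> i < dim_row R \<and> R $$ (i, j) = 1 \<and> (\<forall>j' < j. R $$ (i, j') = 0)"

definition trref :: "'a::field mat \<Rightarrow> 'a mat" where
  "trref A = (let R = rref A; n = dim_col A in
     mat n n (\<lambda>(j, l). if \<exists>i. pivot_at R i j then R $$ (THE i. pivot_at R i j, l) else 0))"

inductive constructible :: "nat \<Rightarrow> nat \<Rightarrow> ('a::field mat \<Rightarrow> 'a) \<Rightarrow> bool"
  for m n where
    cf_const: "constructible m n (\<lambda>A. c)"
  | cf_entry: "i < m \<Longrightarrow> j < n \<Longrightarrow> constructible m n (\<lambda>A. A $$ (i, j))"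
  | cf_add: "constructible m n f \<Longrightarrow> constructible m n g \<Longrightarrow> constructible m n (\<lambda>A. f A + g A)"
  | cf_sub: "constructible m n f \<Longrightarrow> constructible m n g \<Longrightarrow> constructible m n (\<lambda>A. f A - g A)"
  | cf_mul: "constructible m n f \<Longrightarrow> constructible m n g \<Longrightarrow> constructible m n (\<lambda>A. f A * g A)"
  | cf_qinv: "constructible m n f \<Longrightarrow> constructible m n (\<lambda>A. qinv (f A))"

end

theory Submission imports Defs "HOL-Library.Function_Algebras" begin


definition fscale :: "'a::field \<Rightarrow> (nat \<Rightarrow> 'a) \<Rightarrow> (nat \<Rightarrow> 'a)" where
  "fscale c f = (\<lambda>l. c * f l)"

interpretation fv: Modules.module "fscale :: 'a::field \<Rightarrow> (nat \<Rightarrow> 'a) \<Rightarrow> (nat \<Rightarrow> 'a)"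
  by standard (auto simp: fscale_def fun_eq_iff algebra_simps)

definition rowT :: "(nat \<Rightarrow> nat \<Rightarrow> 'a::field) \<Rightarrow> nat \<Rightarrow> nat \<Rightarrow> nat \<Rightarrow> 'a" where
  "rowT T n j = (\<lambda>l. if l < n then T j l else 0)"

definition rowsT :: "nat \<Rightarrow> (nat \<Rightarrow> nat \<Rightarrow> 'a::field) \<Rightarrow> (nat \<Rightarrow> 'a) set" where
  "rowsT n T = rowT T n ` {..<n}"

definition shape :: "nat \<Rightarrow> (nat \<Rightarrow> nat \<Rightarrow> 'a::field) \<Rightarrow> bool" where
  "shape n T \<longleftrightarrow> (\<forall>j<n. T j j = 0 \<or> T j j = 1) \<and>
     (\<forall>j<n. T j j = 0 \<longrightarrow> (\<forall>l<n. T j l = 0)) \<and>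
     (\<forall>j<n. T j j = 1 \<longrightarrow> (\<forall>l<j. T j l = 0)) \<and>
     (\<forall>j<n. \<forall>j'<n. j \<noteq> j' \<longrightarrow> T j' j' = 1 \<longrightarrow> T j j' = 0)"

lemma sh_01: "shape n T \<Longrightarrow> j < n \<Longrightarrow> T j j = 0 \<or> T j j = 1"
  unfolding shape_def by blast
lemma sh_zero: "shape n T \<Longrightarrow> j < n \<Longrightarrow> T j j \<noteq> 1 \<Longrightarrow> l < n \<Longrightarrow> T j l = 0"
  unfolding shape_def by blast
lemma sh_left: "shape n T \<Longrightarrow> j < n \<Longrightarrow> T j j = 1 \<Longrightarrow> l < j \<Longrightarrow> T j l = 0"
  unfolding shape_def by blast
lemma sh_col: "shape n T \<Longrightarrow> j < n \<Longrightarrow> j' < n \<Longrightarrow> j \<noteq> j' \<Longrightarrow> T j' j' = 1 \<Longrightarrow> T j j' = 0"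
  unfolding shape_def by blast

lemma gen_repr:
  assumes sh: "shape n T" and j': "j' < n"
  shows "rowT T n j' l = (\<Sum>j<n. rowT T n j' j * T j j * rowT T n j l)"
proof (cases "T j' j' = 1")
  case False
  have "rowT T n j' i = 0" for i using sh_zero[OF sh j' False, of i] by (simp add: rowT_def)
  thus ?thesis by simp
next
  case True
  have "(\<Sum>j<n. rowT T n j' j * T j j * rowT T n j l) =
        (\<Sum>j<n. if j = j' then rowT T n j' l else 0)"
  proof (rule sum.cong[OF refl])
    fix j assume j: "j \<in> {..<n}"
    show "rowT T n j' j * T j j * rowT T n j l = (if j = j' then rowT T n j' l else 0)"
    proof (cases "j = j'")
      case True thus ?thesis using \<open>T j' j' = 1\<close> j' by (simp add: rowT_def)
    next
      case False
      have "T j j = 0 \<or> T j j = 1" using sh_01[OF sh] j by simp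
      moreover have "T j j = 1 \<Longrightarrow> T j' j = 0" using sh_col[OF sh j' _ False[symmetric]] j by simp
      ultimately show ?thesis using False j by (auto simp: rowT_def)
    qed
  qed
  also have "\<dots> = rowT T n j' l" using j' by simp
  finally show ?thesis by simp
qed

lemma span_repr:
  assumes sh: "shape n T" and x: "x \<in> fv.span (rowsT n T)"
  shows "x l = (\<Sum>j<n. x j * T j j * rowT T n j l)"
  using x
proof (induction arbitrary: l rule: fv.span_induct_alt)
  case base thus ?case by simp
next
  case (step c x y)
  from step(1) obtain j' where j': "j' < n" and xe: "x = rowT T n j'" unfolding rowsT_def by auto
  have "(fscale c x + y) l = c * x l + y l" by (simp add: fscale_def)
  also have "\<dots> = c * (\<Sum>j<n. x j * T j j * rowT T n j l) + (\<Sum>j<n. y j * T j j * rowT T n j l)"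
    using gen_repr[OF sh j', of l] step(2)[of l] xe by simp
  also have "\<dots> = (\<Sum>j<n. (fscale c x + y) j * T j j * rowT T n j l)"
    by (simp add: fscale_def sum_distrib_left sum.distrib[symmetric] algebra_simps)
  finally show ?case .
qed

lemma pivot_transfer:
  assumes sh: "shape n T" and sh': "shape n T'"
    and sp: "rowsT n T' \<subseteq> fv.span (rowsT n T)"
    and p: "p < n" and T'p: "T' p p = 1"
  shows "T p p = 1"
proof (rule ccontr)
  assume np: "T p p \<noteq> 1"
  have "rowT T' n p \<in> fv.span (rowsT n T)" using sp p unfolding rowsT_def by auto
  from span_repr[OF sh this, of p]
  have "1 = (\<Sum>j<n. rowT T' n p j * T j j * rowT T n j p)" using p T'p by (simp add: rowT_def)
  also have "\<dots> = 0"
  proof (rule sum.neutral, intro ballI)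
    fix j assume j: "j \<in> {..<n}"
    hence j: "j < n" by simp
    consider "j < p" | "j = p" | "p < j" by arith
    thus "rowT T' n p j * T j j * rowT T n j p = 0"
    proof cases
      case 1 thus ?thesis using sh_left[OF sh' p T'p 1] by (simp add: rowT_def)
    next
      case 2 thus ?thesis using sh_zero[OF sh p np p] p by (simp add: rowT_def)
    next
      case 3
      have "T j j = 0 \<or> T j j = 1" using sh_01[OF sh j] .
      thus ?thesis using sh_left[OF sh j _ 3] by (auto simp: rowT_def)
    qed
  qed
  finally show False by simp
qed

lemma trref_unique:
  assumes sh: "shape n T" and sh': "shape n T'"
    and sp: "fv.span (rowsT n T) = fv.span (rowsT n T')"
    and j: "j < n" and l: "l < n"
  shows "T j l = T' j l"
proof -
  have s1: "rowsT n T' \<subseteq> fv.span (rowsT n T)" using sp fv.span_superset by auto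
  have s2: "rowsT n T \<subseteq> fv.span (rowsT n T')" using sp fv.span_superset by auto
  have piv: "T i i = 1 \<longleftrightarrow> T' i i = 1" if "i < n" for i
    using pivot_transfer[OF sh sh' s1 that] pivot_transfer[OF sh' sh s2 that] by blast
  show ?thesis
  proof (cases "T j j = 1")
    case False
    hence "T' j j \<noteq> 1" using piv[OF j] by simp
    thus ?thesis using sh_zero[OF sh j False l] sh_zero[OF sh' j _ l] by simp
  next
    case True
    hence T'j: "T' j j = 1" using piv[OF j] by simp
    have "rowT T' n j \<in> fv.span (rowsT n T)" using s1 j unfolding rowsT_def by auto
    from span_repr[OF sh this, of l]
    have "T' j l = (\<Sum>i<n. rowT T' n j i * T i i * rowT T n i l)" using l by (simp add: rowT_def)
    also have "\<dots> = (\<Sum>i<n. if i = j then T j l else 0)"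
    proof (rule sum.cong[OF refl])
      fix i assume i: "i \<in> {..<n}"
      hence i: "i < n" by simp
      show "rowT T' n j i * T i i * rowT T n i l = (if i = j then T j l else 0)"
      proof (cases "i = j")
        case True thus ?thesis using T'j \<open>T j j = 1\<close> j l by (simp add: rowT_def)
      next
        case False
        have "T i i = 0 \<or> T i i = 1" using sh_01[OF sh i] .
        moreover have "T i i = 1 \<Longrightarrow> T' j i = 0" using sh_col[OF sh' j i False[symmetric]] piv[OF i] by simp
        ultimately show ?thesis using False i by (auto simp: rowT_def)
      qed
    qed
    also have "\<dots> = T j l" using j by simp
    finally show ?thesis by simp
  qed
qed

lemma sum_fun_apply: "(sum f A) x = (\<Sum>a\<in>A. f a x)"
  by (induct A rule: infinite_finite_induct) auto

definition wvec :: "nat \<Rightarrow> (nat \<Rightarrow> nat \<Rightarrow> 'a::field) \<Rightarrow> (nat \<Rightarrow> 'a) \<Rightarrow> nat \<Rightarrow> 'a" where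
  "wvec n T v = (\<lambda>l. v l - (\<Sum>j<n. v j * T j j * rowT T n j l))"

definition sflag :: "(nat \<Rightarrow> 'a::field) \<Rightarrow> nat \<Rightarrow> 'a" where
  "sflag w j = (if w j \<noteq> 0 \<and> (\<forall>i<j. w i = 0) then 1 else 0)"

definition newT :: "nat \<Rightarrow> (nat \<Rightarrow> nat \<Rightarrow> 'a::field) \<Rightarrow> (nat \<Rightarrow> 'a) \<Rightarrow> nat \<Rightarrow> nat \<Rightarrow> 'a" where
  "newT n T v = (let w = wvec n T v; cc = (\<Sum>j<n. sflag w j * qinv (w j)) in
     (\<lambda>j l. T j l - (\<Sum>l'<n. sflag w l' * T j l') * (cc * w l) + sflag w j * (cc * w l)))"

lemma wvec_pivot:
  assumes sh: "shape n T" and j: "j < n" and Tj: "T j j = 1"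
  shows "wvec n T v j = 0"
proof -
  have "(\<Sum>i<n. v i * T i i * rowT T n i j) = (\<Sum>i<n. if i = j then v j else 0)"
  proof (rule sum.cong[OF refl])
    fix i assume i: "i \<in> {..<n}"
    hence i: "i < n" by simp
    show "v i * T i i * rowT T n i j = (if i = j then v j else 0)"
    proof (cases "i = j")
      case True thus ?thesis using Tj j by (simp add: rowT_def)
    next
      case False
      have "T i i = 0 \<or> T i i = 1" using sh_01[OF sh i] .
      thus ?thesis using sh_col[OF sh i j False Tj] False by (auto simp: rowT_def)
    qed
  qed
  thus ?thesis using j by (simp add: wvec_def)
qed

lemma wvec_fun:
  assumes v: "\<forall>l\<ge>n. v l = 0"
  shows "wvec n T v = v - (\<Sum>j<n. fscale (v j * T j j) (rowT T n j))"
  using v by (auto simp: fun_eq_iff wvec_def sum_fun_apply fscale_def rowT_def)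

lemma wvec_span: "\<forall>l\<ge>n. v l = 0 \<Longrightarrow> wvec n T v \<in> fv.span (insert v (rowsT n T))"
  unfolding wvec_fun
  by (intro fv.span_diff fv.span_sum fv.span_scale fv.span_base) (auto simp: rowsT_def)

lemma v_span: "\<forall>l\<ge>n. v l = 0 \<Longrightarrow> v \<in> fv.span (insert (wvec n T v) (rowsT n T))"
proof -
  assume v: "\<forall>l\<ge>n. v l = 0"
  have "v = wvec n T v + (\<Sum>j<n. fscale (v j * T j j) (rowT T n j))"
    unfolding wvec_fun[OF v] by simp
  also have "\<dots> \<in> fv.span (insert (wvec n T v) (rowsT n T))"
    by (intro fv.span_add fv.span_sum fv.span_scale fv.span_base) (auto simp: rowsT_def)
  finally show ?thesis .
qed

lemma insert_zero:
  assumes sh: "shape n T" and v: "\<forall>l\<ge>n. v l = 0" and w0: "\<forall>l<n. wvec n T v l = 0"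
  shows "newT n T v = T \<and> fv.span (insert v (rowsT n T)) = fv.span (rowsT n T)"
proof
  have s0: "sflag (wvec n T v) j = 0" if "j < n" for j using w0 that by (simp add: sflag_def)
  hence "(\<Sum>j<n. sflag (wvec n T v) j * qinv (wvec n T v j)) = 0" by simp
  thus "newT n T v = T" by (simp add: newT_def Let_def fun_eq_iff)
  have "wvec n T v = 0"
  proof (rule ext)
    fix l show "wvec n T v l = 0 l"
    proof (cases "l < n")
      case True thus ?thesis using w0 by simp
    next
      case False thus ?thesis using v by (simp add: wvec_def rowT_def)
    qed
  qed
  hence "v \<in> fv.span (insert 0 (rowsT n T))" using v_span[OF v, of T] by simp
  then obtain k where "v - fscale k 0 \<in> fv.span (rowsT n T)" unfolding fv.span_breakdown_eq by blast
  moreover have "fscale k 0 = (0::nat\<Rightarrow>'a)" by (simp add: fscale_def fun_eq_iff)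
  ultimately have vs: "v \<in> fv.span (rowsT n T)" by simp
  show "fv.span (insert v (rowsT n T)) = fv.span (rowsT n T)"
    unfolding fv.span_eq using vs fv.span_superset by blast
qed

lemma span_trans: "x \<in> fv.span A \<Longrightarrow> A \<subseteq> fv.span B \<Longrightarrow> x \<in> fv.span B"
  using fv.span_mono[of A "fv.span B"] fv.span_span[of B] by auto

lemma insert_nonzero:
  assumes sh: "shape n T" and v: "\<forall>l\<ge>n. v l = 0" and w0: "\<exists>l<n. wvec n T v l \<noteq> 0"
  shows "shape n (newT n T v) \<and> fv.span (rowsT n (newT n T v)) = fv.span (insert v (rowsT n T))"
proof -
  define w where "w = wvec n T v"
  define p where "p = (LEAST l. w l \<noteq> 0)"
  from w0 obtain l0 where l0: "l0 < n" "w l0 \<noteq> 0" unfolding w_def by blast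
  have wp: "w p \<noteq> 0" unfolding p_def by (rule LeastI, rule l0(2))
  have pl: "p \<le> l0" unfolding p_def by (rule Least_le, rule l0(2))
  hence p: "p < n" using l0 by simp
  have wlt: "w i = 0" if "i < p" for i using not_less_Least[OF that[unfolded p_def]] by simp
  have sf: "sflag w j = (if j = p then 1 else 0)" for j
  proof -
    consider "j < p" | "j = p" | "p < j" by arith
    thus ?thesis
    proof cases
      case 1 thus ?thesis using wlt[OF 1] by (simp add: sflag_def)
    next
      case 2 thus ?thesis using wlt wp by (simp add: sflag_def)
    next
      case 3 thus ?thesis using wp by (auto simp: sflag_def)
    qed
  qed
  define u where "u = (\<lambda>l. w l / w p)"
  have cc: "(\<Sum>j<n. sflag w j * qinv (w j)) = 1 / w p"
  proof -
    have "(\<Sum>j<n. sflag w j * qinv (w j)) = (\<Sum>j<n. if j = p then qinv (w p) else 0)"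
      by (rule sum.cong) (auto simp: sf)
    thus ?thesis using p wp by (simp add: qinv_def)
  qed
  have tp: "(\<Sum>l'<n. sflag w l' * T j l') = T j p" for j
  proof -
    have "(\<Sum>l'<n. sflag w l' * T j l') = (\<Sum>l'<n. if l' = p then T j p else 0)"
      by (rule sum.cong) (auto simp: sf)
    thus ?thesis using p by simp
  qed
  define T' where "T' = newT n T v"
  have T'e: "T' j l = T j l - T j p * u l + (if j = p then u l else 0)" for j l
    unfolding T'_def newT_def Let_def w_def[symmetric] cc tp u_def by (simp add: sf)
  have Tpp: "T p p \<noteq> 1" using wvec_pivot[OF sh p, of v] wp unfolding w_def by auto
  have Tp0: "T p l = 0" if "l < n" for l using sh_zero[OF sh p Tpp that] .
  have up: "u p = 1" using wp by (simp add: u_def)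
  have ult: "u l = 0" if "l < p" for l using wlt[OF that] by (simp add: u_def)
  have upiv: "u j = 0" if "j < n" "T j j = 1" for j
    using wvec_pivot[OF sh that] by (simp add: u_def w_def)
  have T'p: "T' p l = u l" if "l < n" for l using T'e[of p l] Tp0[OF that] Tp0[OF p] by simp
  have T'j: "T' j l = T j l - T j p * u l" if "j \<noteq> p" for j l using T'e[of j l] that by simp
  have diag: "T' j j = (if T j j = 1 then 1 else 0)" if "j < n" "j \<noteq> p" for j
  proof (cases "T j j = 1")
    case True thus ?thesis using T'j[OF that(2)] upiv[OF that(1) True] by simp
  next
    case False thus ?thesis using T'j[OF that(2)] sh_zero[OF sh that(1) False] that p by simp
  qed
  have shT': "shape n T'"
    unfolding shape_def
  proof (intro conjI allI impI)
    fix j assume j: "j < n"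
    show "T' j j = 0 \<or> T' j j = 1"
      by (cases "j = p") (use T'p[OF p] up diag[OF j] in auto)
  next
    fix j l assume j: "j < n" and z: "T' j j = 0" and l: "l < n"
    have "j \<noteq> p" using z T'p[OF p] up by auto
    with z diag[OF j] have "T j j \<noteq> 1" by (auto split: if_splits)
    thus "T' j l = 0" using T'j[OF \<open>j \<noteq> p\<close>] sh_zero[OF sh j _ l] sh_zero[OF sh j _ p] by simp
  next
    fix j l assume j: "j < n" and o: "T' j j = 1" and l: "l < j"
    show "T' j l = 0"
    proof (cases "j = p")
      case True thus ?thesis using T'p ult l j by simp
    next
      case False
      with o diag[OF j] have Tj: "T j j = 1" by (auto split: if_splits)
      have "T j p = 0 \<or> u l = 0"
      proof (cases "p < j")
        case True thus ?thesis using sh_left[OF sh j Tj] by simp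
      next
        case False thus ?thesis using ult l \<open>j \<noteq> p\<close> by simp
      qed
      thus ?thesis using T'j[OF \<open>j \<noteq> p\<close>] sh_left[OF sh j Tj l] by auto
    qed
  next
    fix j j' assume j: "j < n" and j': "j' < n" and ne: "j \<noteq> j'" and o: "T' j' j' = 1"
    show "T' j j' = 0"
    proof (cases "j' = p")
      case True thus ?thesis using T'j[of j] ne up by simp
    next
      case False
      with o diag[OF j'] have Tj: "T j' j' = 1" by (auto split: if_splits)
      have "T' j j' = T j j'" using T'e[of j j'] upiv[OF j' Tj] by simp
      thus ?thesis using sh_col[OF sh j j' ne Tj] by simp
    qed
  qed
  have wfun: "w = fscale (w p) (rowT T' n p)"
  proof (rule ext)
    fix l show "w l = fscale (w p) (rowT T' n p) l"
    proof (cases "l < n")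
      case True
      have "w l = w p * u l" using wp by (simp add: u_def)
      thus ?thesis using T'p[OF True] True by (simp add: fscale_def rowT_def)
    next
      case False
      hence "w l = 0" using v unfolding w_def wvec_def rowT_def by simp
      thus ?thesis using False by (simp add: fscale_def rowT_def)
    qed
  qed
  have pfun: "rowT T' n p = fscale (1 / w p) w"
  proof -
    have "fscale (1 / w p) w = fscale (1 / w p) (fscale (w p) (rowT T' n p))"
      using wfun by (rule arg_cong)
    also have "\<dots> = rowT T' n p" using wp by (simp add: fscale_def)
    finally show ?thesis by simp
  qed
  have jfun: "rowT T' n j = rowT T n j - fscale (T j p) (rowT T' n p)" if "j \<noteq> p" for j
    using T'j[OF that] T'p by (auto simp: fun_eq_iff fscale_def rowT_def)
  have jfun2: "rowT T n j = rowT T' n j + fscale (T j p) (rowT T' n p)" if "j \<noteq> p" for j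
    using jfun[OF that] by simp
  have wsp: "w \<in> fv.span (insert v (rowsT n T))" unfolding w_def by (rule wvec_span[OF v])
  have s1: "rowsT n T' \<subseteq> fv.span (insert v (rowsT n T))"
  proof
    fix x assume "x \<in> rowsT n T'"
    then obtain j where j: "j < n" and x: "x = rowT T' n j" unfolding rowsT_def by auto
    have pin: "rowT T' n p \<in> fv.span (insert v (rowsT n T))"
      unfolding pfun by (rule fv.span_scale[OF wsp])
    show "x \<in> fv.span (insert v (rowsT n T))"
    proof (cases "j = p")
      case True thus ?thesis using pin x by simp
    next
      case False
      have "rowT T n j \<in> fv.span (insert v (rowsT n T))"
        by (rule fv.span_base) (use j in \<open>auto simp: rowsT_def\<close>)
      thus ?thesis unfolding x jfun[OF False]
        by (intro fv.span_diff fv.span_scale pin)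
    qed
  qed
  have pin': "rowT T' n p \<in> fv.span (rowsT n T')"
    by (rule fv.span_base) (use p in \<open>auto simp: rowsT_def\<close>)
  have s2: "insert w (rowsT n T) \<subseteq> fv.span (rowsT n T')"
  proof
    fix x assume "x \<in> insert w (rowsT n T)"
    then consider "x = w" | j where "j < n" "x = rowT T n j" unfolding rowsT_def by auto
    thus "x \<in> fv.span (rowsT n T')"
    proof cases
      case 1
      have "fscale (w p) (rowT T' n p) \<in> fv.span (rowsT n T')" by (rule fv.span_scale[OF pin'])
      moreover have "x = fscale (w p) (rowT T' n p)" using 1 wfun by (rule trans)
      ultimately show ?thesis by simp
    next
      case (2 j)
      show ?thesis
      proof (cases "j = p")
        case True
        have "rowT T n j = 0" using True Tp0 by (auto simp: fun_eq_iff rowT_def)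
        thus ?thesis using 2 fv.span_zero by simp
      next
        case False
        have "rowT T' n j \<in> fv.span (rowsT n T')"
          by (rule fv.span_base) (use 2 in \<open>auto simp: rowsT_def\<close>)
        thus ?thesis unfolding 2 jfun2[OF False] by (intro fv.span_add fv.span_scale pin')
      qed
    qed
  qed
  have s3: "insert v (rowsT n T) \<subseteq> fv.span (rowsT n T')"
  proof -
    have "v \<in> fv.span (rowsT n T')" using span_trans[OF v_span[OF v, of T] s2[unfolded w_def]] .
    moreover have "rowsT n T \<subseteq> fv.span (rowsT n T')" using s2 by auto
    ultimately show ?thesis by auto
  qed
  show ?thesis unfolding T'_def[symmetric] using shT' s1 s3 fv.span_eq by blast
qed

lemma insert_ok:
  assumes sh: "shape n T" and v: "\<forall>l\<ge>n. v l = 0"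
  shows "shape n (newT n T v) \<and> fv.span (rowsT n (newT n T v)) = fv.span (insert v (rowsT n T))"
proof (cases "\<exists>l<n. wvec n T v l \<noteq> 0")
  case True thus ?thesis using insert_nonzero[OF sh v] by blast
next
  case False thus ?thesis using insert_zero[OF sh v] sh by auto
qed

lemma span_insert_cong: "fv.span S = fv.span S' \<Longrightarrow> fv.span (insert a S) = fv.span (insert a S')"
proof -
  assume e: "fv.span S = fv.span S'"
  have "insert a S \<subseteq> fv.span (insert a S')"
  proof
    fix x assume "x \<in> insert a S"
    moreover have "S \<subseteq> fv.span (insert a S')"
      using e fv.span_superset[of S] fv.span_mono[of S' "insert a S'"] by blast
    ultimately show "x \<in> fv.span (insert a S')" using fv.span_base[of a] by blast
  qed
  moreover have "insert a S' \<subseteq> fv.span (insert a S)"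
  proof
    fix x assume "x \<in> insert a S'"
    moreover have "S' \<subseteq> fv.span (insert a S)"
      using e fv.span_superset[of S'] fv.span_mono[of S "insert a S"] by blast
    ultimately show "x \<in> fv.span (insert a S)" using fv.span_base[of a] by blast
  qed
  ultimately show ?thesis unfolding fv.span_eq by blast
qed

definition arow :: "'a::field mat \<Rightarrow> nat \<Rightarrow> nat \<Rightarrow> nat \<Rightarrow> 'a" where
  "arow A n r = (\<lambda>l. if l < n then A $$ (r, l) else 0)"

fun Tk :: "'a::field mat \<Rightarrow> nat \<Rightarrow> nat \<Rightarrow> nat \<Rightarrow> nat \<Rightarrow> 'a" where
  "Tk A n 0 = (\<lambda>j l. 0)"
| "Tk A n (Suc r) = newT n (Tk A n r) (arow A n r)"

lemma Tk_ok: "shape n (Tk A n r) \<and> fv.span (rowsT n (Tk A n r)) = fv.span (arow A n ` {..<r})"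
proof (induction r)
  case 0
  have sh: "shape n (\<lambda>(j::nat) (l::nat). 0::'a)" by (simp add: shape_def)
  have "rowT (\<lambda>j l. 0::'a) n j = 0" for j by (simp add: rowT_def fun_eq_iff)
  hence "rowsT n (\<lambda>j l. 0::'a) \<subseteq> fv.span {}" using fv.span_zero unfolding rowsT_def by auto
  hence "fv.span (rowsT n (\<lambda>j l. 0::'a)) = fv.span {}" unfolding fv.span_eq by simp
  thus ?case using sh by simp
next
  case (Suc r)
  have v: "\<forall>l\<ge>n. arow A n r l = 0" by (simp add: arow_def)
  from insert_ok[OF conjunct1[OF Suc.IH] v] span_insert_cong[OF conjunct2[OF Suc.IH], of "arow A n r"]
  show ?case by (simp add: lessThan_Suc)
qed

lemma mult_row_span:
  assumes A: "A \<in> carrier_mat m n" and P: "P \<in> carrier_mat m' m" and i: "i < m'"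
  shows "arow (P * A) n i \<in> fv.span (arow A n ` {..<m})"
proof -
  have "arow (P * A) n i = (\<Sum>k<m. fscale (P $$ (i, k)) (arow A n k))"
  proof (rule ext)
    fix l show "arow (P * A) n i l = (\<Sum>k<m. fscale (P $$ (i, k)) (arow A n k)) l"
    proof (cases "l < n")
      case True
      have "(P * A) $$ (i, l) = row P i \<bullet> col A l" using A P i True by simp
      also have "\<dots> = (\<Sum>k<m. P $$ (i, k) * A $$ (k, l))"
        using A P i True by (simp add: scalar_prod_def lessThan_atLeast0)
      finally show ?thesis using True by (simp add: arow_def sum_fun_apply fscale_def)
    next
      case False thus ?thesis by (simp add: arow_def sum_fun_apply fscale_def)
    qed
  qed
  also have "\<dots> \<in> fv.span (arow A n ` {..<m})"
    by (intro fv.span_sum fv.span_scale fv.span_base) auto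
  finally show ?thesis .
qed

definition Pred :: "'a::field mat \<Rightarrow> 'a mat \<Rightarrow> bool" where
  "Pred A R \<longleftrightarrow> R \<in> carrier_mat (dim_row A) (dim_col A) \<and> row_echelon_form R \<and>
      (\<exists>P. P \<in> carrier_mat (dim_row A) (dim_row A) \<and> invertible_mat P \<and> R = P * A)"

lemma Pred_span:
  assumes A: "A \<in> carrier_mat m n" and PR: "Pred A R"
  shows "fv.span (arow R n ` {..<m}) = fv.span (arow A n ` {..<m})"
proof -
  from PR A obtain P where P: "P \<in> carrier_mat m m" "invertible_mat P" and R: "R = P * A"
    unfolding Pred_def by auto
  from P(2) obtain Q where PQ: "inverts_mat P Q" and QP: "inverts_mat Q P"
    unfolding invertible_mat_def by auto
  have QP1: "Q * P = 1\<^sub>m (dim_row Q)" using QP unfolding inverts_mat_def .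
  have PQ1: "P * Q = 1\<^sub>m m" using PQ P unfolding inverts_mat_def by simp
  have "dim_col Q = m" using arg_cong[OF PQ1, of dim_col] P by simp
  moreover have "dim_row Q = m" using arg_cong[OF QP1, of dim_col] P by simp
  ultimately have Q: "Q \<in> carrier_mat m m" by auto
  have QP1: "Q * P = 1\<^sub>m m" using QP1 Q by simp
  have "Q * R = A" unfolding R using assoc_mult_mat[OF Q P(1) A, symmetric] QP1 A by simp
  have RC: "R \<in> carrier_mat m n" using R P A by simp
  have s1: "arow R n ` {..<m} \<subseteq> fv.span (arow A n ` {..<m})"
    using mult_row_span[OF A P(1)] R by auto
  have s2: "arow A n ` {..<m} \<subseteq> fv.span (arow R n ` {..<m})"
    using mult_row_span[OF RC Q] \<open>Q * R = A\<close> by auto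
  show ?thesis unfolding fv.span_eq using s1 s2 by blast
qed

lemma pivot_at_iff:
  assumes R: "(R::'a::field mat) \<in> carrier_mat m n" and pf: "pivot_fun R f n" and j: "j < n"
  shows "pivot_at R i j \<longleftrightarrow> i < m \<and> f i = j"
proof -
  have d: "dim_row R = m" using R by simp
  note pd = pivot_funD[OF d pf]
  show ?thesis
  proof
    assume pa: "pivot_at R i j"
    hence i: "i < m" and r1: "R $$ (i, j) = 1" and lz: "\<forall>j'<j. R $$ (i, j') = 0"
      unfolding pivot_at_def using d by auto
    have "f i = j"
    proof (rule ccontr)
      assume "f i \<noteq> j"
      hence "f i < j \<or> j < f i" by arith
      thus False
      proof
        assume "f i < j"
        hence "f i < n" using j by simp
        thus False using pd(4)[OF i] lz \<open>f i < j\<close> by auto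
      next
        assume "j < f i" thus False using pd(2)[OF i] r1 by auto
      qed
    qed
    thus "i < m \<and> f i = j" using i by simp
  next
    assume "i < m \<and> f i = j"
    thus "pivot_at R i j" unfolding pivot_at_def using d pd(2,4) j by auto
  qed
qed

lemma pivot_inj:
  assumes R: "(R::'a::field mat) \<in> carrier_mat m n" and pf: "pivot_fun R f n"
    and i: "i < m" "i' < m" "f i = f i'" "f i < n"
  shows "i = i'"
proof (rule ccontr)
  assume ne: "i \<noteq> i'"
  have d: "dim_row R = m" using R by simp
  note pd = pivot_funD[OF d pf]
  have "R $$ (i', f i) = 0" using pd(5)[OF i(1) i(4) i(2)] ne by simp
  moreover have "R $$ (i', f i') = 1" using pd(4)[OF i(2)] i by simp
  ultimately show False using i by simp
qed

definition TR :: "'a::field mat \<Rightarrow> nat \<Rightarrow> nat \<Rightarrow> 'a" where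
  "TR R = (\<lambda>j l. if \<exists>i. pivot_at R i j then R $$ (THE i. pivot_at R i j, l) else 0)"

lemma TR_eq:
  assumes R: "R \<in> carrier_mat m n" and pf: "pivot_fun R f n" and i: "i < m" and fi: "f i < n"
  shows "TR R (f i) l = R $$ (i, l)"
proof -
  have pa: "pivot_at R i' (f i) \<longleftrightarrow> i' = i" for i'
    using pivot_at_iff[OF R pf fi] pivot_inj[OF R pf _ i] i fi by auto
  hence "(THE i'. pivot_at R i' (f i)) = i" by simp
  thus ?thesis unfolding TR_def using pa by auto
qed

lemma TR_zero:
  assumes R: "R \<in> carrier_mat m n" and pf: "pivot_fun R f n" and j: "j < n"
    and np: "\<not> (\<exists>i<m. f i = j)"
  shows "TR R j l = 0"
  using pivot_at_iff[OF R pf j] np unfolding TR_def by auto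

lemma TR_ok:
  assumes R: "R \<in> carrier_mat m n" and pf: "pivot_fun R f n"
  shows "shape n (TR R) \<and> fv.span (rowsT n (TR R)) = fv.span (arow R n ` {..<m})"
proof -
  have d: "dim_row R = m" using R by simp
  note pd = pivot_funD[OF d pf]
  have sh: "shape n (TR R)"
    unfolding shape_def
  proof (intro conjI allI impI)
    fix j assume j: "j < n"
    show "TR R j j = 0 \<or> TR R j j = 1"
    proof (cases "\<exists>i<m. f i = j")
      case True then obtain i where i: "i < m" "f i = j" by auto
      thus ?thesis using TR_eq[OF R pf i(1)] j pd(4)[OF i(1)] by auto
    next
      case False thus ?thesis using TR_zero[OF R pf j] by simp
    qed
  next
    fix j l assume j: "j < n" and z: "TR R j j = 0" and l: "l < n"
    show "TR R j l = 0"
    proof (cases "\<exists>i<m. f i = j")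
      case True then obtain i where i: "i < m" "f i = j" by auto
      thus ?thesis using TR_eq[OF R pf i(1)] j pd(4)[OF i(1)] z by auto
    next
      case False thus ?thesis using TR_zero[OF R pf j] by simp
    qed
  next
    fix j l assume j: "j < n" and o: "TR R j j = 1" and l: "l < j"
    show "TR R j l = 0"
    proof (cases "\<exists>i<m. f i = j")
      case True then obtain i where i: "i < m" "f i = j" by auto
      thus ?thesis using TR_eq[OF R pf i(1)] j pd(2)[OF i(1)] l by auto
    next
      case False thus ?thesis using TR_zero[OF R pf j] by simp
    qed
  next
    fix j j' assume j: "j < n" and j': "j' < n" and ne: "j \<noteq> j'" and o: "TR R j' j' = 1"
    have "\<exists>i<m. f i = j'" using o TR_zero[OF R pf j'] by force
    then obtain i' where i': "i' < m" "f i' = j'" by auto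
    show "TR R j j' = 0"
    proof (cases "\<exists>i<m. f i = j")
      case True then obtain i where i: "i < m" "f i = j" by auto
      have "i \<noteq> i'" using i i' ne by auto
      thus ?thesis using TR_eq[OF R pf i(1)] j i pd(5)[OF i'(1) _ i(1)] i' j' by auto
    next
      case False thus ?thesis using TR_zero[OF R pf j] by simp
    qed
  qed
  have s1: "rowsT n (TR R) \<subseteq> fv.span (arow R n ` {..<m})"
  proof
    fix x assume "x \<in> rowsT n (TR R)"
    then obtain j where j: "j < n" and x: "x = rowT (TR R) n j" unfolding rowsT_def by auto
    show "x \<in> fv.span (arow R n ` {..<m})"
    proof (cases "\<exists>i<m. f i = j")
      case True then obtain i where i: "i < m" "f i = j" by auto
      have "x = arow R n i" using TR_eq[OF R pf i(1)] i j x by (auto simp: fun_eq_iff rowT_def arow_def)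
      thus ?thesis using i by (auto intro: fv.span_base)
    next
      case False
      have "x = 0" using TR_zero[OF R pf j False] x by (auto simp: fun_eq_iff rowT_def)
      thus ?thesis using fv.span_zero by simp
    qed
  qed
  have s2: "arow R n ` {..<m} \<subseteq> fv.span (rowsT n (TR R))"
  proof
    fix x assume "x \<in> arow R n ` {..<m}"
    then obtain i where i: "i < m" and x: "x = arow R n i" by auto
    show "x \<in> fv.span (rowsT n (TR R))"
    proof (cases "f i < n")
      case True
      have "x = rowT (TR R) n (f i)" using TR_eq[OF R pf i True] x by (auto simp: fun_eq_iff rowT_def arow_def)
      thus ?thesis using True by (auto simp: rowsT_def intro: fv.span_base)
    next
      case False
      have "x = 0" using pd(2)[OF i] x False by (auto simp: fun_eq_iff arow_def)
      thus ?thesis using fv.span_zero by simp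
    qed
  qed
  show ?thesis using sh s1 s2 unfolding fv.span_eq by blast
qed

lemma shape_cong1:
  assumes sh: "shape n T" and e: "\<And>j l. j < n \<Longrightarrow> l < n \<Longrightarrow> T j l = T' j l"
  shows "shape n T'"
  unfolding shape_def
proof (intro conjI allI impI)
  fix j assume j: "j < n"
  show "T' j j = 0 \<or> T' j j = 1" using sh_01[OF sh j] e[OF j j] by simp
next
  fix j l assume j: "j < n" and z: "T' j j = 0" and l: "l < n"
  show "T' j l = 0" using sh_zero[OF sh j _ l] e[OF j j] e[OF j l] z by simp
next
  fix j l assume j: "j < n" and o: "T' j j = 1" and l: "l < j"
  have l': "l < n" using l j by simp
  show "T' j l = 0" using sh_left[OF sh j _ l] e[OF j j] e[OF j l'] o by simp
next
  fix j j' assume j: "j < n" and j': "j' < n" and ne: "j \<noteq> j'" and o: "T' j' j' = 1"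
  show "T' j j' = 0" using sh_col[OF sh j j' ne] e[OF j' j'] e[OF j j'] o by simp
qed

lemma shape_cong: "(\<And>j l. j < n \<Longrightarrow> l < n \<Longrightarrow> T j l = T' j l) \<Longrightarrow> shape n T = shape n T'"
  using shape_cong1[of n T T'] shape_cong1[of n T' T] by metis

lemma rowsT_cong: "(\<And>j l. j < n \<Longrightarrow> l < n \<Longrightarrow> T j l = T' j l) \<Longrightarrow> rowsT n T = rowsT n T'"
  unfolding rowsT_def rowT_def by (intro image_cong refl ext) auto

lemma pivot_mono:
  assumes R: "(R::'a::field mat) \<in> carrier_mat m n" and pf: "pivot_fun R f n"
    and i: "i < i'" "i' < m" "f i' < n"
  shows "f i < f i'"
proof -
  have d: "dim_row R = m" using R by simp
  have "i + (i' - i) < m" using i by simp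
  from pivot_bound[OF d pf this] i show ?thesis by simp
qed

lemma pivot_funs_eq:
  assumes R1: "(R1::'a::field mat) \<in> carrier_mat m n" and pf1: "pivot_fun R1 f1 n"
    and R2: "(R2::'a::field mat) \<in> carrier_mat m n" and pf2: "pivot_fun R2 f2 n"
    and same: "\<And>j. j < n \<Longrightarrow> (\<exists>i<m. f1 i = j) \<longleftrightarrow> (\<exists>i<m. f2 i = j)"
  shows "i < m \<Longrightarrow> f1 i = f2 i"
proof (induction i rule: less_induct)
  case (less i)
  have d1: "dim_row R1 = m" and d2: "dim_row R2 = m" using R1 R2 by auto
  have b1: "f1 i \<le> n" using pivot_funD(1)[OF d1 pf1 less.prems] .
  have b2: "f2 i \<le> n" using pivot_funD(1)[OF d2 pf2 less.prems] .
  {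
    fix g1 g2 and S1 S2 :: "'a mat"
    assume S1: "S1 \<in> carrier_mat m n" and pg1: "pivot_fun S1 g1 n"
      and S2: "S2 \<in> carrier_mat m n" and pg2: "pivot_fun S2 g2 n"
      and IH: "\<forall>i'<i. g1 i' = g2 i'"
      and sm: "\<And>j. j < n \<Longrightarrow> (\<exists>i<m. g1 i = j) \<longrightarrow> (\<exists>i<m. g2 i = j)"
      and lt: "g1 i < g2 i" and c2: "g2 i \<le> n"
    have False
    proof -
      have "g1 i < n" using lt c2 by simp
      then obtain i'' where i'': "i'' < m" "g2 i'' = g1 i" using sm less.prems by blast
      consider "i'' < i" | "i'' = i" | "i < i''" by arith
      thus False
      proof cases
        case 1
        have eq: "g1 i'' = g1 i" using IH 1 i'' by simp
        have "g1 i'' < n" using eq \<open>g1 i < n\<close> by simp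
        from pivot_inj[OF S1 pg1 i''(1) less.prems eq this] 1 show False by simp
      next
        case 2 thus False using i'' lt by simp
      next
        case 3
        have "g2 i < g2 i''" using pivot_mono[OF S2 pg2 3 i''(1)] i'' \<open>g1 i < n\<close> by simp
        thus False using i'' lt by simp
      qed
    qed
  } note key = this
  show ?case
  proof (rule ccontr)
    assume "f1 i \<noteq> f2 i"
    hence "f1 i < f2 i \<or> f2 i < f1 i" by arith
    thus False
    proof
      assume "f1 i < f2 i"
      show False by (rule key[OF R1 pf1 R2 pf2 _ _ \<open>f1 i < f2 i\<close> b2]) (use less.IH less.prems same in auto)
    next
      assume "f2 i < f1 i"
      show False by (rule key[OF R2 pf2 R1 pf1 _ _ \<open>f2 i < f1 i\<close> b1]) (use less.IH less.prems same in auto)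
    qed
  qed
qed

lemma Pred_TR:
  assumes A: "A \<in> carrier_mat m n" and PR: "Pred A R"
  shows "\<exists>f. R \<in> carrier_mat m n \<and> pivot_fun R f n \<and> shape n (TR R) \<and>
     fv.span (rowsT n (TR R)) = fv.span (arow A n ` {..<m})"
proof -
  have R: "R \<in> carrier_mat m n" using PR A unfolding Pred_def by auto
  obtain f where pf: "pivot_fun R f n" using PR R unfolding Pred_def row_echelon_form_def by auto
  show ?thesis using R pf TR_ok[OF R pf] Pred_span[OF A PR] by auto
qed

lemma Pred_unique:
  assumes A: "A \<in> carrier_mat m n" and P1: "Pred A R1" and P2: "Pred A R2"
  shows "R1 = R2"
proof -
  obtain f1 where R1: "R1 \<in> carrier_mat m n" and pf1: "pivot_fun R1 f1 n"
    and sh1: "shape n (TR R1)" and sp1: "fv.span (rowsT n (TR R1)) = fv.span (arow A n ` {..<m})"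
    using Pred_TR[OF A P1] by blast
  obtain f2 where R2: "R2 \<in> carrier_mat m n" and pf2: "pivot_fun R2 f2 n"
    and sh2: "shape n (TR R2)" and sp2: "fv.span (rowsT n (TR R2)) = fv.span (arow A n ` {..<m})"
    using Pred_TR[OF A P2] by blast
  have eqT: "TR R1 j l = TR R2 j l" if "j < n" "l < n" for j l
    using trref_unique[OF sh1 sh2 _ that] sp1 sp2 by simp
  have d1: "dim_row R1 = m" and d2: "dim_row R2 = m" using R1 R2 by auto
  have piv: "(\<exists>i<m. f1 i = j) \<longleftrightarrow> (\<exists>i<m. f2 i = j)" if j: "j < n" for j
  proof -
    have "(\<exists>i<m. f1 i = j) \<longleftrightarrow> TR R1 j j = 1"
    proof
      assume "\<exists>i<m. f1 i = j"
      then obtain i where i: "i < m" "f1 i = j" by auto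
      thus "TR R1 j j = 1" using TR_eq[OF R1 pf1 i(1)] pivot_funD(4)[OF d1 pf1 i(1)] j by auto
    qed (use TR_zero[OF R1 pf1 j] in force)
    moreover have "(\<exists>i<m. f2 i = j) \<longleftrightarrow> TR R2 j j = 1"
    proof
      assume "\<exists>i<m. f2 i = j"
      then obtain i where i: "i < m" "f2 i = j" by auto
      thus "TR R2 j j = 1" using TR_eq[OF R2 pf2 i(1)] pivot_funD(4)[OF d2 pf2 i(1)] j by auto
    qed (use TR_zero[OF R2 pf2 j] in force)
    ultimately show ?thesis using eqT[OF j j] by simp
  qed
  have feq: "f1 i = f2 i" if "i < m" for i by (rule pivot_funs_eq[OF R1 pf1 R2 pf2 piv that])
  show ?thesis
  proof (rule eq_matI)
    show "dim_row R1 = dim_row R2" "dim_col R1 = dim_col R2" using R1 R2 by auto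
  next
    fix i l assume i: "i < dim_row R2" and l: "l < dim_col R2"
    hence i: "i < m" and l: "l < n" using R2 by auto
    show "R1 $$ (i, l) = R2 $$ (i, l)"
    proof (cases "f1 i < n")
      case True
      have "R1 $$ (i, l) = TR R1 (f1 i) l" using TR_eq[OF R1 pf1 i True] by simp
      also have "\<dots> = TR R2 (f2 i) l" using eqT[OF True l] feq[OF i] by simp
      also have "\<dots> = R2 $$ (i, l)" using TR_eq[OF R2 pf2 i] True feq[OF i] by simp
      finally show ?thesis .
    next
      case False
      hence "f1 i = n" "f2 i = n" using pivot_funD(1)[OF d1 pf1 i] feq[OF i] by auto
      thus ?thesis using pivot_funD(2)[OF d1 pf1 i] pivot_funD(2)[OF d2 pf2 i] l by simp
    qed
  qed
qed

lemma Pred_exists: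
  assumes A: "(A::'a::field mat) \<in> carrier_mat m n"
  shows "\<exists>R. Pred A R"
proof -
  obtain A' B' where g: "gauss_jordan A A = (A', B')" by (cases "gauss_jordan A A")
  have A': "A' \<in> carrier_mat m n" using gauss_jordan_carrier(1)[OF A A g] .
  have re: "row_echelon_form A'" using gauss_jordan_row_echelon[OF A g] .
  from gauss_jordan_transform[OF A A g, of undefined] obtain P
    where P: "P \<in> Units (ring_mat TYPE('a) m undefined)" and e: "A' = P * A" by auto
  have "P \<in> carrier_mat m m \<and> (\<exists>Q\<in>carrier_mat m m. Q * P = 1\<^sub>m m \<and> P * Q = 1\<^sub>m m)"
    using P unfolding Units_def by (simp add: ring_mat_simps)
  then obtain Q where Pc: "P \<in> carrier_mat m m" and Qc: "Q \<in> carrier_mat m m"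
    and QP: "Q * P = 1\<^sub>m m" and PQ: "P * Q = 1\<^sub>m m" by blast
  have "square_mat P" using Pc by simp
  moreover have "inverts_mat P Q" unfolding inverts_mat_def using Pc PQ by simp
  moreover have "inverts_mat Q P" unfolding inverts_mat_def using Qc QP by simp
  ultimately have "invertible_mat P" unfolding invertible_mat_def by blast
  hence "Pred A A'" unfolding Pred_def using A A' re e Pc by auto
  thus ?thesis by blast
qed

lemma rref_Pred: "A \<in> carrier_mat m n \<Longrightarrow> Pred A (rref A)"
proof -
  assume A: "A \<in> carrier_mat m n"
  have ex1: "\<exists>!R. Pred A R" using Pred_exists[OF A] Pred_unique[OF A] by blast
  have "rref A = (THE R. Pred A R)" unfolding rref_def Pred_def by (rule refl)
  thus ?thesis using theI'[OF ex1] by simp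
qed

lemma trref_char:
  assumes A: "A \<in> carrier_mat m n"
  shows "shape n (\<lambda>j l. trref A $$ (j, l)) \<and>
     fv.span (rowsT n (\<lambda>j l. trref A $$ (j, l))) = fv.span (arow A n ` {..<m})"
proof -
  obtain f where R: "rref A \<in> carrier_mat m n" and sh: "shape n (TR (rref A))"
    and sp: "fv.span (rowsT n (TR (rref A))) = fv.span (arow A n ` {..<m})"
    using Pred_TR[OF A rref_Pred[OF A]] by blast
  have dc: "dim_col A = n" using A by simp
  have e: "trref A $$ (j, l) = TR (rref A) j l" if j: "j < n" and l: "l < n" for j l
    unfolding trref_def Let_def dc TR_def
    by (simp only: index_mat(1)[OF j l] split prod.case)
  have 1: "shape n (\<lambda>j l. trref A $$ (j, l)) = shape n (TR (rref A))"
    by (rule shape_cong) (simp add: e)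
  have 2: "rowsT n (\<lambda>j l. trref A $$ (j, l)) = rowsT n (TR (rref A))"
    by (rule rowsT_cong) (simp add: e)
  show ?thesis unfolding 1 2 using sh sp by blast
qed

lemma trref_carrier: "A \<in> carrier_mat m n \<Longrightarrow> trref A \<in> carrier_mat n n"
  unfolding trref_def Let_def by simp

lemma Tk_trref:
  assumes A: "A \<in> carrier_mat m n" and j: "j < n" and l: "l < n"
  shows "Tk A n m j l = trref A $$ (j, l)"
proof -
  have a: "shape n (Tk A n m)" and b: "fv.span (rowsT n (Tk A n m)) = fv.span (arow A n ` {..<m})"
    using Tk_ok[of n A m] by blast+
  have c: "shape n (\<lambda>j l. trref A $$ (j, l))"
    and d: "fv.span (rowsT n (\<lambda>j l. trref A $$ (j, l))) = fv.span (arow A n ` {..<m})"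
    using trref_char[OF A] by blast+
  have "Tk A n m j l = (\<lambda>j l. trref A $$ (j, l)) j l"
    by (rule trref_unique[OF a c _ j l]) (simp add: b d)
  thus ?thesis by simp
qed




fun eval_abs :: "'a::field instr \<Rightarrow> 'a list \<Rightarrow> 'a" where
  "eval_abs (Add a b) t = t ! a + t ! b"
| "eval_abs (Sub a b) t = t ! a - t ! b"
| "eval_abs (Mul a b) t = t ! a * t ! b"
| "eval_abs (QInv a) t = qinv (t ! a)"
| "eval_abs (Const c) t = c"
| "eval_abs (Recall a) t = t ! a"

definition run_abs :: "'a::field instr list \<Rightarrow> 'a list \<Rightarrow> 'a list" where
  "run_abs prog t = fold (\<lambda>ins t. t @ [eval_abs ins t]) prog t"

fun conv :: "nat \<Rightarrow> 'a instr \<Rightarrow> 'a instr" where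
  "conv p (Add a b) = Add (p - a) (p - b)"
| "conv p (Sub a b) = Sub (p - a) (p - b)"
| "conv p (Mul a b) = Mul (p - a) (p - b)"
| "conv p (QInv a) = QInv (p - a)"
| "conv p (Const c) = Const c"
| "conv p (Recall a) = Recall (p - a)"

fun conv_prog :: "nat \<Rightarrow> 'a instr list \<Rightarrow> 'a instr list" where
  "conv_prog p [] = []"
| "conv_prog p (x # xs) = conv p x # conv_prog (Suc p) xs"

definition okabs :: "nat \<Rightarrow> 'a instr list \<Rightarrow> bool" where
  "okabs p prog \<longleftrightarrow> (\<forall>i<length prog. \<forall>a\<in>offsets (prog ! i). a < p + i)"

lemma run_abs_Nil[simp]: "run_abs [] t = t"
  by (simp add: run_abs_def)

lemma run_abs_Cons[simp]: "run_abs (x # xs) t = run_abs xs (t @ [eval_abs x t])"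
  by (simp add: run_abs_def)

lemma run_abs_append: "run_abs (c1 @ c2) t = run_abs c2 (run_abs c1 t)"
  by (simp add: run_abs_def)

lemma run_abs_ext: "\<exists>xs. run_abs c t = t @ xs \<and> length xs = length c"
proof (induction c arbitrary: t)
  case Nil thus ?case by simp
next
  case (Cons x c)
  from Cons.IH[of "t @ [eval_abs x t]"] obtain xs where
    "run_abs c (t @ [eval_abs x t]) = t @ [eval_abs x t] @ xs" "length xs = length c" by auto
  thus ?case by (intro exI[of _ "eval_abs x t # xs"]) simp
qed

lemma length_run_abs[simp]: "length (run_abs c t) = length t + length c"
  using run_abs_ext[of c t] by auto

lemma run_abs_nth: "a < length t \<Longrightarrow> run_abs c t ! a = t ! a"
  using run_abs_ext[of c t] by (auto simp: nth_append)

lemma okabs_Cons: "okabs p (x # xs) \<longleftrightarrow> (\<forall>a\<in>offsets x. a < p) \<and> okabs (Suc p) xs"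
  unfolding okabs_def by (simp add: All_less_Suc2)

lemma okabs_Nil[simp]: "okabs p []"
  by (simp add: okabs_def)

lemma okabs_append: "okabs p (c1 @ c2) \<longleftrightarrow> okabs p c1 \<and> okabs (p + length c1) c2"
proof (induction c1 arbitrary: p)
  case Nil thus ?case by simp
next
  case (Cons a c1) thus ?case by (simp add: okabs_Cons)
qed

lemma eval_conv: "\<forall>a\<in>offsets x. a < length t \<Longrightarrow> eval_instr (conv (length t) x) t = eval_abs x t"
  by (cases x) (auto simp: cell_def)

lemma run_conv: "okabs (length t) c \<Longrightarrow> run_slp (conv_prog (length t) c) t = run_abs c t"
proof (induction c arbitrary: t)
  case Nil thus ?case by (simp add: run_slp_def)
next
  case (Cons x c)
  from Cons.prems have o: "\<forall>a\<in>offsets x. a < length t" and o2: "okabs (Suc (length t)) c"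
    by (auto simp: okabs_Cons)
  have "run_slp (conv_prog (length t) (x # c)) t =
        run_slp (conv_prog (Suc (length t)) c) (t @ [eval_instr (conv (length t) x) t])"
    by (simp add: run_slp_def)
  also have "\<dots> = run_slp (conv_prog (length (t @ [eval_abs x t])) c) (t @ [eval_abs x t])"
    using eval_conv[OF o] by simp
  also have "\<dots> = run_abs c (t @ [eval_abs x t])" using Cons.IH[of "t @ [eval_abs x t]"] o2 by simp
  finally show ?case by simp
qed

lemma length_conv_prog[simp]: "length (conv_prog p c) = length c"
  by (induction c arbitrary: p) auto

lemma nth_conv_prog: "i < length c \<Longrightarrow> conv_prog p c ! i = conv (p + i) (c ! i)"
  by (induction c arbitrary: p i) (auto simp: nth_Cons' split: nat.splits)

lemma offsets_conv: "offsets (conv q x) = (\<lambda>a. q - a) ` offsets x"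
  by (cases x) auto

lemma valid_conv: "okabs p c \<Longrightarrow> valid_slp p (conv_prog p c)"
  unfolding valid_slp_def
proof (intro allI impI ballI)
  fix i j assume o: "okabs p c" and i: "i < length (conv_prog p c)" and j: "j \<in> offsets (conv_prog p c ! i)"
  from i have i': "i < length c" by simp
  from j obtain a where a: "a \<in> offsets (c ! i)" and je: "j = p + i - a"
    unfolding nth_conv_prog[OF i'] offsets_conv by auto
  have "a < p + i" using o i' a unfolding okabs_def by blast
  thus "1 \<le> j \<and> j \<le> p + i" using je by simp
qed

section \<open>Generators\<close>

type_synonym ('a, 'r) gen = "nat \<Rightarrow> 'r \<times> 'a instr list"

definition gbind :: "('a, 'r) gen \<Rightarrow> ('r \<Rightarrow> ('a, 's) gen) \<Rightarrow> ('a, 's) gen" where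
  "gbind g f = (\<lambda>p. case g p of (r1, c1) \<Rightarrow> (case f r1 (p + length c1) of (r2, c2) \<Rightarrow> (r2, c1 @ c2)))"

definition gret :: "'r \<Rightarrow> ('a, 'r) gen" where
  "gret r = (\<lambda>p. (r, []))"

definition emit :: "'a instr \<Rightarrow> ('a, nat) gen" where
  "emit ins = (\<lambda>p. (p, [ins]))"

definition hoare :: "('a::field list \<Rightarrow> bool) \<Rightarrow> ('a, 'r) gen \<Rightarrow> ('r \<Rightarrow> 'a list \<Rightarrow> bool) \<Rightarrow> bool" where
  "hoare P g Q \<longleftrightarrow> (\<forall>t. P t \<longrightarrow> (case g (length t) of (r, c) \<Rightarrow> okabs (length t) c \<and> Q r (run_abs c t)))"

lemma hoare_bind:
  assumes "hoare P g Q" and "\<And>r. hoare (Q r) (f r) R"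
  shows "hoare P (gbind g f) R"
  unfolding hoare_def
proof (intro allI impI)
  fix t assume P: "P t"
  obtain r1 c1 where g: "g (length t) = (r1, c1)" by (cases "g (length t)")
  with assms(1) P have o1: "okabs (length t) c1" and Q: "Q r1 (run_abs c1 t)"
    unfolding hoare_def by (auto split: prod.splits)
  obtain r2 c2 where f: "f r1 (length t + length c1) = (r2, c2)" by (cases "f r1 (length t + length c1)")
  with assms(2)[of r1] Q have o2: "okabs (length t + length c1) c2" and R: "R r2 (run_abs c2 (run_abs c1 t))"
    unfolding hoare_def by (auto split: prod.splits)
  show "case gbind g f (length t) of (r, c) \<Rightarrow> okabs (length t) c \<and> R r (run_abs c t)"
    unfolding gbind_def using g f o1 o2 R by (simp add: okabs_append run_abs_append)
qed

lemma hoare_ret: "(\<And>t. P t \<Longrightarrow> Q r t) \<Longrightarrow> hoare P (gret r) Q"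
  unfolding hoare_def gret_def by (simp add: okabs_def)

lemma hoare_emit:
  "(\<And>t. P t \<Longrightarrow> (\<forall>a\<in>offsets ins. a < length t) \<and> Q (length t) (t @ [eval_abs ins t]))
   \<Longrightarrow> hoare P (emit ins) Q"
  unfolding hoare_def emit_def by (simp add: okabs_def)

lemma hoare_conseq:
  "hoare P g Q \<Longrightarrow> (\<And>t. P' t \<Longrightarrow> P t) \<Longrightarrow> (\<And>r t. Q r t \<Longrightarrow> Q' r t) \<Longrightarrow> hoare P' g Q'"
proof -
  assume h: "hoare P g Q" and pp: "\<And>t. P' t \<Longrightarrow> P t" and qq: "\<And>r t. Q r t \<Longrightarrow> Q' r t"
  show "hoare P' g Q'" unfolding hoare_def
  proof (intro allI impI)
    fix t assume "P' t"
    hence "P t" by (rule pp)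
    obtain r c where g: "g (length t) = (r, c)" by (cases "g (length t)")
    with h \<open>P t\<close> have "okabs (length t) c" "Q r (run_abs c t)" unfolding hoare_def by auto
    thus "case g (length t) of (r, c) \<Rightarrow> okabs (length t) c \<and> Q' r (run_abs c t)"
      using g qq by simp
  qed
qed

definition stable :: "('a list \<Rightarrow> bool) \<Rightarrow> bool" where
  "stable F \<longleftrightarrow> (\<forall>t xs. F t \<longrightarrow> F (t @ xs))"

definition hold :: "'a list \<Rightarrow> nat \<Rightarrow> 'a \<Rightarrow> bool" where
  "hold t a x \<longleftrightarrow> a < length t \<and> t ! a = x"

lemma stable_at[intro]: "stable (\<lambda>t. hold t a x)"
  unfolding stable_def hold_def by (auto simp: nth_append)
lemma stable_conj[intro]: "stable F \<Longrightarrow> stable G \<Longrightarrow> stable (\<lambda>t. F t \<and> G t)"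
  unfolding stable_def by auto
lemma stable_all[intro]: "(\<And>x. stable (F x)) \<Longrightarrow> stable (\<lambda>t. \<forall>x. F x t)"
  unfolding stable_def by auto
lemma stable_imp[intro]: "stable F \<Longrightarrow> stable (\<lambda>t. P \<longrightarrow> F t)"
  unfolding stable_def by auto
lemma stable_const[intro]: "stable (\<lambda>t. P)"
  unfolding stable_def by auto

lemma stable_run: "stable F \<Longrightarrow> F t \<Longrightarrow> F (run_abs c t)"
  using run_abs_ext[of c t] unfolding stable_def by auto

lemma at_app: "hold t a x \<Longrightarrow> hold (t @ xs) a x"
  unfolding hold_def by (auto simp: nth_append)

lemma at_new: "hold (t @ [y]) (length t) y"
  unfolding hold_def by simp

lemma hoare_frame:
  assumes "stable F" "hoare P g Q"
  shows "hoare (\<lambda>t. P t \<and> F t) g (\<lambda>r t. Q r t \<and> F t)"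
  unfolding hoare_def
proof (intro allI impI)
  fix t assume "P t \<and> F t"
  obtain r c where g: "g (length t) = (r, c)" by (cases "g (length t)")
  with assms(2) \<open>P t \<and> F t\<close> have "okabs (length t) c" "Q r (run_abs c t)" unfolding hoare_def by auto
  moreover have "F (run_abs c t)" using stable_run[OF assms(1)] \<open>P t \<and> F t\<close> by blast
  ultimately show "case g (length t) of (r, c) \<Rightarrow> okabs (length t) c \<and> Q r (run_abs c t) \<and> F (run_abs c t)"
    using g by simp
qed

lemma emit_spec:
  assumes "stable F" "\<And>t. F t \<Longrightarrow> (\<forall>a\<in>offsets ins. a < length t) \<and> eval_abs ins t = x"
  shows "hoare F (emit ins) (\<lambda>r t. F t \<and> hold t r x)"
  by (rule hoare_emit) (use assms in \<open>auto simp: stable_def hold_def\<close>)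

lemma emit_mul: "stable F \<Longrightarrow> (\<And>t. F t \<Longrightarrow> hold t a x \<and> hold t b y) \<Longrightarrow>
    hoare F (emit (Mul a b)) (\<lambda>r t. F t \<and> hold t r (x * y))"
  by (rule emit_spec) (auto simp: hold_def)
lemma emit_add: "stable F \<Longrightarrow> (\<And>t. F t \<Longrightarrow> hold t a x \<and> hold t b y) \<Longrightarrow>
    hoare F (emit (Add a b)) (\<lambda>r t. F t \<and> hold t r (x + y))"
  by (rule emit_spec) (auto simp: hold_def)
lemma emit_sub: "stable F \<Longrightarrow> (\<And>t. F t \<Longrightarrow> hold t a x \<and> hold t b y) \<Longrightarrow>
    hoare F (emit (Sub a b)) (\<lambda>r t. F t \<and> hold t r (x - y))"
  by (rule emit_spec) (auto simp: hold_def)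
lemma emit_qinv: "stable F \<Longrightarrow> (\<And>t. F t \<Longrightarrow> hold t a x) \<Longrightarrow>
    hoare F (emit (QInv a)) (\<lambda>r t. F t \<and> hold t r (qinv x))"
  by (rule emit_spec) (auto simp: hold_def)
lemma emit_const: "stable F \<Longrightarrow> hoare F (emit (Const c)) (\<lambda>r t. F t \<and> hold t r c)"
  by (rule emit_spec) auto

definition glen :: "('a, 'r) gen \<Rightarrow> nat \<Rightarrow> bool" where
  "glen g L \<longleftrightarrow> (\<forall>p. length (snd (g p)) = L)"

lemma glen_bind: "glen g L1 \<Longrightarrow> (\<And>r. glen (f r) L2) \<Longrightarrow> glen (gbind g f) (L1 + L2)"
  unfolding glen_def gbind_def by (auto split: prod.splits) (metis snd_conv)+

lemma glen_ret: "glen (gret r) 0" unfolding glen_def gret_def by simp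
lemma glen_emit: "glen (emit i) 1" unfolding glen_def emit_def by simp

fun lcg :: "nat \<Rightarrow> (nat \<Rightarrow> nat) \<Rightarrow> (nat \<Rightarrow> nat) \<Rightarrow> nat \<Rightarrow> ('a, nat) gen" where
  "lcg x cA yA 0 = gret x"
| "lcg x cA yA (Suc k) = gbind (lcg x cA yA k) (\<lambda>a. gbind (emit (Mul (cA k) (yA k))) (\<lambda>p. emit (Add a p)))"

lemma glen_lcg: "glen (lcg x cA yA k :: ('a, nat) gen) (2 * k)"
proof (induction k)
  case 0 thus ?case by (simp add: glen_ret)
next
  case (Suc k)
  have "glen (lcg x cA yA (Suc k) :: ('a, nat) gen) (2 * k + (1 + 1))"
    unfolding lcg.simps by (rule glen_bind[OF Suc.IH], rule glen_bind, rule glen_emit, rule glen_emit)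
  thus ?case by simp
qed

lemma lcg_spec:
  "stable F \<Longrightarrow> (\<And>t. F t \<Longrightarrow> hold t x xv \<and> (\<forall>i<k. hold t (cA i) (cv i) \<and> hold t (yA i) (yv i))) \<Longrightarrow>
   hoare F (lcg x cA yA k) (\<lambda>r t. F t \<and> hold t r (xv + (\<Sum>i<k. cv i * yv i)))"
proof (induction k)
  case 0 thus ?case by (auto intro!: hoare_ret)
next
  case (Suc k)
  have IH: "hoare F (lcg x cA yA k) (\<lambda>r t. F t \<and> hold t r (xv + (\<Sum>i<k. cv i * yv i)))"
    using Suc.prems by (intro Suc.IH) auto
  show ?case unfolding lcg.simps
  proof (rule hoare_bind[OF IH])
    fix a
    let ?F = "\<lambda>t. F t \<and> hold t a (xv + (\<Sum>i<k. cv i * yv i))"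
    have st: "stable ?F" using Suc.prems(1) by auto
    show "hoare ?F (gbind (emit (Mul (cA k) (yA k))) (\<lambda>p. emit (Add a p)))
            (\<lambda>r t. F t \<and> hold t r (xv + (\<Sum>i<Suc k. cv i * yv i)))"
    proof (rule hoare_bind[OF emit_mul[OF st]])
      fix t assume "?F t" thus "hold t (cA k) (cv k) \<and> hold t (yA k) (yv k)" using Suc.prems(2) by auto
    next
      fix p
      have st2: "stable (\<lambda>t. ?F t \<and> hold t p (cv k * yv k))" by (rule stable_conj[OF st stable_at])
      show "hoare (\<lambda>t. ?F t \<and> hold t p (cv k * yv k)) (emit (Add a p))
              (\<lambda>r t. F t \<and> hold t r (xv + (\<Sum>i<Suc k. cv i * yv i)))"
        by (rule hoare_conseq[OF emit_add[OF st2]]) (auto simp: add.assoc)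
    qed
  qed
qed

fun mapg :: "(nat \<Rightarrow> ('a, 'r) gen) \<Rightarrow> nat \<Rightarrow> ('a, 'r list) gen" where
  "mapg g 0 = gret []"
| "mapg g (Suc k) = gbind (mapg g k) (\<lambda>rs. gbind (g k) (\<lambda>r. gret (rs @ [r])))"

lemma glen_mapg: "(\<And>i. glen (g i) L) \<Longrightarrow> glen (mapg g k) (k * L)"
proof (induction k)
  case 0 thus ?case by (simp add: glen_ret)
next
  case (Suc k)
  have "glen (mapg g (Suc k)) (k * L + (L + 0))"
    unfolding mapg.simps by (intro glen_bind Suc glen_ret)
  thus ?case by (simp add: add.commute)
qed

lemma mapg_spec:
  assumes st: "stable F" and stQ: "\<And>i r. stable (Q i r)"
    and gi: "\<And>i F'. i < k \<Longrightarrow> stable F' \<Longrightarrow> (\<And>t. F' t \<Longrightarrow> F t) \<Longrightarrow> hoare F' (g i) (\<lambda>r t. F' t \<and> Q i r t)"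
  shows "hoare F (mapg g k) (\<lambda>rs t. F t \<and> length rs = k \<and> (\<forall>i<k. Q i (rs ! i) t))"
  using gi
proof (induction k)
  case 0 thus ?case by (auto intro!: hoare_ret)
next
  case (Suc k)
  have IH: "hoare F (mapg g k) (\<lambda>rs t. F t \<and> length rs = k \<and> (\<forall>i<k. Q i (rs ! i) t))"
    using Suc.prems by (intro Suc.IH) auto
  show ?case unfolding mapg.simps
  proof (rule hoare_bind[OF IH])
    fix rs
    let ?F = "\<lambda>t. F t \<and> length rs = k \<and> (\<forall>i<k. Q i (rs ! i) t)"
    have st2: "stable ?F" using st stQ by (intro stable_conj stable_const stable_all stable_imp) auto
    show "hoare ?F (gbind (g k) (\<lambda>r. gret (rs @ [r])))
        (\<lambda>rs t. F t \<and> length rs = Suc k \<and> (\<forall>i<Suc k. Q i (rs ! i) t))"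
    proof (rule hoare_bind[OF Suc.prems[of k ?F]])
      fix r
      show "hoare (\<lambda>t. ?F t \<and> Q k r t) (gret (rs @ [r]))
        (\<lambda>rs t. F t \<and> length rs = Suc k \<and> (\<forall>i<Suc k. Q i (rs ! i) t))"
        by (rule hoare_ret) (auto simp: nth_append less_Suc_eq)
    qed (use st2 in auto)
  qed
qed

fun fvals :: "(nat \<Rightarrow> 'a::field) \<Rightarrow> 'a \<Rightarrow> nat \<Rightarrow> 'a" where
  "fvals ev f0 0 = f0"
| "fvals ev f0 (Suc k) = fvals ev f0 k - fvals ev f0 k * ev k"

fun flagsg :: "nat \<Rightarrow> (nat \<Rightarrow> nat) \<Rightarrow> nat \<Rightarrow> ('a, nat list \<times> nat) gen" where
  "flagsg f0 eA 0 = gret ([], f0)"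
| "flagsg f0 eA (Suc k) = gbind (flagsg f0 eA k) (\<lambda>r. gbind (emit (Mul (snd r) (eA k)))
      (\<lambda>s. gbind (emit (Sub (snd r) s)) (\<lambda>f'. gret (fst r @ [s], f'))))"

lemma glen_flagsg: "glen (flagsg f0 eA k :: ('a, nat list \<times> nat) gen) (2 * k)"
proof (induction k)
  case 0 thus ?case by (simp add: glen_ret)
next
  case (Suc k)
  have "glen (flagsg f0 eA (Suc k) :: ('a, nat list \<times> nat) gen) (2 * k + (1 + (1 + 0)))"
    unfolding flagsg.simps by (rule glen_bind[OF Suc.IH], rule glen_bind, rule glen_emit, rule glen_bind, rule glen_emit, rule glen_ret)
  thus ?case by simp
qed

lemma flagsg_spec:
  "stable F \<Longrightarrow> (\<And>t. F t \<Longrightarrow> hold t f0 f0v \<and> (\<forall>i<k. hold t (eA i) (ev i))) \<Longrightarrow>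
   hoare F (flagsg f0 eA k) (\<lambda>r t. F t \<and> hold t (snd r) (fvals ev f0v k) \<and> length (fst r) = k \<and>
       (\<forall>i<k. hold t (fst r ! i) (fvals ev f0v i * ev i)))"
proof (induction k)
  case 0 thus ?case by (auto intro!: hoare_ret)
next
  case (Suc k)
  let ?Q = "\<lambda>r t. F t \<and> hold t (snd r) (fvals ev f0v k) \<and> length (fst r) = k \<and>
       (\<forall>i<k. hold t (fst r ! i) (fvals ev f0v i * ev i))"
  have IH: "hoare F (flagsg f0 eA k) ?Q" using Suc.prems by (intro Suc.IH) auto
  show ?case unfolding flagsg.simps
  proof (rule hoare_bind[OF IH])
    fix r
    have st: "stable (?Q r)" using Suc.prems(1) by (intro stable_conj stable_const stable_all stable_imp stable_at) auto
    show "hoare (?Q r) (gbind (emit (Mul (snd r) (eA k)))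
      (\<lambda>s. gbind (emit (Sub (snd r) s)) (\<lambda>f'. gret (fst r @ [s], f'))))
      (\<lambda>r t. F t \<and> hold t (snd r) (fvals ev f0v (Suc k)) \<and> length (fst r) = Suc k \<and>
       (\<forall>i<Suc k. hold t (fst r ! i) (fvals ev f0v i * ev i)))"
    proof (rule hoare_bind[OF emit_mul[OF st]])
      fix t assume "?Q r t" thus "hold t (snd r) (fvals ev f0v k) \<and> hold t (eA k) (ev k)"
        using Suc.prems(2) by auto
    next
      fix s
      have st2: "stable (\<lambda>t. ?Q r t \<and> hold t s (fvals ev f0v k * ev k))" by (rule stable_conj[OF st stable_at])
      show "hoare (\<lambda>t. ?Q r t \<and> hold t s (fvals ev f0v k * ev k))
        (gbind (emit (Sub (snd r) s)) (\<lambda>f'. gret (fst r @ [s], f')))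
        (\<lambda>r t. F t \<and> hold t (snd r) (fvals ev f0v (Suc k)) \<and> length (fst r) = Suc k \<and>
       (\<forall>i<Suc k. hold t (fst r ! i) (fvals ev f0v i * ev i)))"
      proof (rule hoare_bind[OF emit_sub[OF st2]])
        fix t assume "?Q r t \<and> hold t s (fvals ev f0v k * ev k)"
        thus "hold t (snd r) (fvals ev f0v k) \<and> hold t s (fvals ev f0v k * ev k)" by auto
      next
        fix f'
        show "hoare (\<lambda>t. (?Q r t \<and> hold t s (fvals ev f0v k * ev k)) \<and>
            hold t f' (fvals ev f0v k - fvals ev f0v k * ev k))
          (gret (fst r @ [s], f'))
          (\<lambda>r t. F t \<and> hold t (snd r) (fvals ev f0v (Suc k)) \<and> length (fst r) = Suc k \<and>
          (\<forall>i<Suc k. hold t (fst r ! i) (fvals ev f0v i * ev i)))"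
          by (rule hoare_ret) (auto simp: nth_append less_Suc_eq)
      qed
    qed
  qed
qed

section \<open>Row insertion gadget\<close>

definition wc :: "nat \<Rightarrow> (nat \<Rightarrow> nat \<Rightarrow> 'a::field) \<Rightarrow> (nat \<Rightarrow> 'a) \<Rightarrow> nat \<Rightarrow> 'a" where
  "wc n T v l = v l + (\<Sum>j<n. (0 - v j * T j j) * T j l)"
definition ec :: "nat \<Rightarrow> (nat \<Rightarrow> nat \<Rightarrow> 'a::field) \<Rightarrow> (nat \<Rightarrow> 'a) \<Rightarrow> nat \<Rightarrow> 'a" where
  "ec n T v j = wc n T v j * qinv (wc n T v j)"
definition sc :: "nat \<Rightarrow> (nat \<Rightarrow> nat \<Rightarrow> 'a::field) \<Rightarrow> (nat \<Rightarrow> 'a) \<Rightarrow> nat \<Rightarrow> 'a" where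
  "sc n T v i = fvals (ec n T v) 1 i * ec n T v i"
definition cc :: "nat \<Rightarrow> (nat \<Rightarrow> nat \<Rightarrow> 'a::field) \<Rightarrow> (nat \<Rightarrow> 'a) \<Rightarrow> 'a" where
  "cc n T v = 0 + (\<Sum>j<n. sc n T v j * qinv (wc n T v j))"
definition uc :: "nat \<Rightarrow> (nat \<Rightarrow> nat \<Rightarrow> 'a::field) \<Rightarrow> (nat \<Rightarrow> 'a) \<Rightarrow> nat \<Rightarrow> 'a" where
  "uc n T v l = cc n T v * wc n T v l"
definition ntc :: "nat \<Rightarrow> (nat \<Rightarrow> nat \<Rightarrow> 'a::field) \<Rightarrow> (nat \<Rightarrow> 'a) \<Rightarrow> nat \<Rightarrow> 'a" where
  "ntc n T v j = 0 - (0 + (\<Sum>l<n. sc n T v l * T j l))"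
definition Tc :: "nat \<Rightarrow> (nat \<Rightarrow> nat \<Rightarrow> 'a::field) \<Rightarrow> (nat \<Rightarrow> 'a) \<Rightarrow> nat \<Rightarrow> nat \<Rightarrow> 'a" where
  "Tc n T v j l = T j l + (\<Sum>i<(2::nat). (if i = 0 then ntc n T v j else sc n T v j) * uc n T v l)"

definition s1 where "s1 n z tA vA = mapg (\<lambda>j. gbind (emit (Mul (vA j) (tA j j))) (\<lambda>c. emit (Sub z c))) n"
definition s2 where "s2 n tA vA ncs = mapg (\<lambda>l. lcg (vA l) (\<lambda>j. ncs ! j) (\<lambda>j. tA j l) n) n"
definition s3 where "s3 n ws = mapg (\<lambda>j. emit (QInv (ws ! j))) n"
definition s4 where "s4 n ws qs = mapg (\<lambda>j. emit (Mul (ws ! j) (qs ! j))) n"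
definition s5 where "s5 n ob es = flagsg ob (\<lambda>j. es ! j) n"
definition s6 where "s6 n z ss qs = lcg z (\<lambda>j. ss ! j) (\<lambda>j. qs ! j) n"
definition s7 where "s7 n c ws = mapg (\<lambda>l. emit (Mul c (ws ! l))) n"
definition s8 where "s8 n z tA ss = mapg (\<lambda>j. gbind (lcg z (\<lambda>l. ss ! l) (\<lambda>l. tA j l) n) (\<lambda>x. emit (Sub z x))) n"
definition s9 where "s9 n tA nts ss us =
  mapg (\<lambda>j. mapg (\<lambda>l. lcg (tA j l) (\<lambda>i. if i = 0 then nts ! j else ss ! j) (\<lambda>i. us ! l) 2) n) n"

definition ins_gen :: "nat \<Rightarrow> nat \<Rightarrow> nat \<Rightarrow> (nat \<Rightarrow> nat \<Rightarrow> nat) \<Rightarrow> (nat \<Rightarrow> nat) \<Rightarrow> ('a::field, nat \<Rightarrow> nat \<Rightarrow> nat) gen" where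
  "ins_gen n z ob tA vA =
    gbind (s1 n z tA vA) (\<lambda>ncs.
    gbind (s2 n tA vA ncs) (\<lambda>ws.
    gbind (s3 n ws) (\<lambda>qs.
    gbind (s4 n ws qs) (\<lambda>es.
    gbind (s5 n ob es) (\<lambda>sf.
    gbind (s6 n z (fst sf) qs) (\<lambda>c.
    gbind (s7 n c ws) (\<lambda>us.
    gbind (s8 n z tA (fst sf)) (\<lambda>nts.
    gbind (s9 n tA nts (fst sf) us) (\<lambda>rss.
    gret (\<lambda>j l. rss ! j ! l))))))))))"

abbreviation hv where "hv t n as f \<equiv> length as = n \<and> (\<forall>i<n. hold t (as ! i) (f i))"

lemma stable_hv[intro]: "stable (\<lambda>t. hv t n as f)"
  by (intro stable_conj stable_const stable_all stable_imp stable_at)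

lemma s1_spec:
  assumes st: "stable F" and pre: "\<And>t. F t \<Longrightarrow> hold t z 0 \<and> (\<forall>j<n. hold t (tA j j) (T j j) \<and> hold t (vA j) (v j))"
  shows "hoare F (s1 n z tA vA) (\<lambda>r t. F t \<and> hv t n r (\<lambda>j. 0 - v j * T j j))"
  unfolding s1_def
proof (rule mapg_spec[OF st stable_at])
  fix i F' assume i: "i < n" and st': "stable F'" and FF: "\<And>t. F' t \<Longrightarrow> F t"
  show "hoare F' (gbind (emit (Mul (vA i) (tA i i))) (\<lambda>c. emit (Sub z c))) (\<lambda>r t. F' t \<and> hold t r (0 - v i * T i i))"
  proof (rule hoare_bind[OF emit_mul[OF st']])
    fix t assume "F' t" thus "hold t (vA i) (v i) \<and> hold t (tA i i) (T i i)" using pre[OF FF] i by blast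
  next
    fix c
    show "hoare (\<lambda>t. F' t \<and> hold t c (v i * T i i)) (emit (Sub z c)) (\<lambda>r t. F' t \<and> hold t r (0 - v i * T i i))"
      by (rule hoare_conseq[OF emit_sub[OF stable_conj[OF st' stable_at]]]) (use pre FF in blast)+
  qed
qed

lemma s2_spec:
  assumes st: "stable F"
    and pre: "\<And>t. F t \<Longrightarrow> (\<forall>j<n. \<forall>l<n. hold t (tA j l) (T j l)) \<and> (\<forall>j<n. hold t (vA j) (v j)) \<and>
                     hv t n ncs (\<lambda>j. 0 - v j * T j j)"
  shows "hoare F (s2 n tA vA ncs) (\<lambda>r t. F t \<and> hv t n r (wc n T v))"
  unfolding s2_def
proof (rule mapg_spec[OF st stable_at])
  fix i F' assume i: "i < n" and st': "stable F'" and FF: "\<And>t. F' t \<Longrightarrow> F t"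
  show "hoare F' (lcg (vA i) (\<lambda>j. ncs ! j) (\<lambda>j. tA j i) n) (\<lambda>r t. F' t \<and> hold t r (wc n T v i))"
    unfolding wc_def by (rule lcg_spec[OF st']) (use pre FF i in blast)
qed

lemma s3_spec:
  assumes st: "stable F" and pre: "\<And>t. F t \<Longrightarrow> hv t n ws w"
  shows "hoare F (s3 n ws) (\<lambda>r t. F t \<and> hv t n r (\<lambda>j. qinv (w j)))"
  unfolding s3_def
proof (rule mapg_spec[OF st stable_at])
  fix i F' assume i: "i < n" and st': "stable F'" and FF: "\<And>t. F' t \<Longrightarrow> F t"
  show "hoare F' (emit (QInv (ws ! i))) (\<lambda>r t. F' t \<and> hold t r (qinv (w i)))"
    by (rule emit_qinv[OF st']) (use pre FF i in blast)
qed

lemma s4_spec: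
  assumes st: "stable F" and pre: "\<And>t. F t \<Longrightarrow> hv t n ws w \<and> hv t n qs (\<lambda>j. qinv (w j))"
  shows "hoare F (s4 n ws qs) (\<lambda>r t. F t \<and> hv t n r (\<lambda>j. w j * qinv (w j)))"
  unfolding s4_def
proof (rule mapg_spec[OF st stable_at])
  fix i F' assume i: "i < n" and st': "stable F'" and FF: "\<And>t. F' t \<Longrightarrow> F t"
  show "hoare F' (emit (Mul (ws ! i) (qs ! i))) (\<lambda>r t. F' t \<and> hold t r (w i * qinv (w i)))"
    by (rule emit_mul[OF st']) (use pre FF i in blast)
qed

lemma s5_spec:
  assumes st: "stable F" and pre: "\<And>t. F t \<Longrightarrow> hold t ob 1 \<and> hv t n es e"
  shows "hoare F (s5 n ob es) (\<lambda>r t. F t \<and> hv t n (fst r) (\<lambda>i. fvals e 1 i * e i))"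
  unfolding s5_def
  by (rule hoare_conseq[OF flagsg_spec[OF st]]) (use pre in auto)

lemma s6_spec:
  assumes st: "stable F" and pre: "\<And>t. F t \<Longrightarrow> hold t z 0 \<and> hv t n ss s \<and> hv t n qs q"
  shows "hoare F (s6 n z ss qs) (\<lambda>r t. F t \<and> hold t r (0 + (\<Sum>j<n. s j * q j)))"
  unfolding s6_def
  by (rule lcg_spec[OF st]) (use pre in auto)

lemma s7_spec:
  assumes st: "stable F" and pre: "\<And>t. F t \<Longrightarrow> hold t c cv \<and> hv t n ws w"
  shows "hoare F (s7 n c ws) (\<lambda>r t. F t \<and> hv t n r (\<lambda>l. cv * w l))"
  unfolding s7_def
proof (rule mapg_spec[OF st stable_at])
  fix i F' assume i: "i < n" and st': "stable F'" and FF: "\<And>t. F' t \<Longrightarrow> F t"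
  show "hoare F' (emit (Mul c (ws ! i))) (\<lambda>r t. F' t \<and> hold t r (cv * w i))"
    by (rule emit_mul[OF st']) (use pre FF i in blast)
qed

lemma s8_spec:
  assumes st: "stable F"
    and pre: "\<And>t. F t \<Longrightarrow> hold t z 0 \<and> (\<forall>j<n. \<forall>l<n. hold t (tA j l) (T j l)) \<and> hv t n ss s"
  shows "hoare F (s8 n z tA ss) (\<lambda>r t. F t \<and> hv t n r (\<lambda>j. 0 - (0 + (\<Sum>l<n. s l * T j l))))"
  unfolding s8_def
proof (rule mapg_spec[OF st stable_at])
  fix i F' assume i: "i < n" and st': "stable F'" and FF: "\<And>t. F' t \<Longrightarrow> F t"
  show "hoare F' (gbind (lcg z (\<lambda>l. ss ! l) (\<lambda>l. tA i l) n) (\<lambda>x. emit (Sub z x)))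
      (\<lambda>r t. F' t \<and> hold t r (0 - (0 + (\<Sum>l<n. s l * T i l))))"
  proof (rule hoare_bind[OF lcg_spec[OF st']])
    fix t assume "F' t"
    thus "hold t z 0 \<and> (\<forall>j<n. hold t (ss ! j) (s j) \<and> hold t (tA i j) (T i j))"
      using pre[OF FF] i by blast
  next
    fix x
    show "hoare (\<lambda>t. F' t \<and> hold t x (0 + (\<Sum>l<n. s l * T i l))) (emit (Sub z x))
        (\<lambda>r t. F' t \<and> hold t r (0 - (0 + (\<Sum>l<n. s l * T i l))))"
      by (rule hoare_conseq[OF emit_sub[OF stable_conj[OF st' stable_at]]]) (use pre FF in blast)+
  qed
qed

lemma s9_spec:
  assumes st: "stable F"
    and pre: "\<And>t. F t \<Longrightarrow> (\<forall>j<n. \<forall>l<n. hold t (tA j l) (T j l)) \<and> hv t n nts nt \<and> hv t n ss s \<and> hv t n us u"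
  shows "hoare F (s9 n tA nts ss us) (\<lambda>r t. F t \<and> length r = n \<and>
     (\<forall>j<n. hv t n (r ! j) (\<lambda>l. T j l + (\<Sum>i<(2::nat). (if i = 0 then nt j else s j) * u l))))"
  unfolding s9_def
proof (rule mapg_spec[OF st])
  fix j r show "stable (\<lambda>t. hv t n r (\<lambda>l. T j l + (\<Sum>i<(2::nat). (if i = 0 then nt j else s j) * u l)))"
    by (rule stable_hv)
next
  fix j F' assume j: "j < n" and st': "stable F'" and FF: "\<And>t. F' t \<Longrightarrow> F t"
  show "hoare F' (mapg (\<lambda>l. lcg (tA j l) (\<lambda>i. if i = 0 then nts ! j else ss ! j) (\<lambda>i. us ! l) 2) n)
     (\<lambda>r t. F' t \<and> hv t n r (\<lambda>l. T j l + (\<Sum>i<(2::nat). (if i = 0 then nt j else s j) * u l)))"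
  proof (rule mapg_spec[OF st' stable_at])
    fix l F'' assume l: "l < n" and st'': "stable F''" and FF': "\<And>t. F'' t \<Longrightarrow> F' t"
    show "hoare F'' (lcg (tA j l) (\<lambda>i. if i = 0 then nts ! j else ss ! j) (\<lambda>i. us ! l) 2)
       (\<lambda>r t. F'' t \<and> hold t r (T j l + (\<Sum>i<(2::nat). (if i = 0 then nt j else s j) * u l)))"
    proof (rule lcg_spec[OF st''])
      fix t assume "F'' t"
      hence P: "(\<forall>j<n. \<forall>l<n. hold t (tA j l) (T j l)) \<and> hv t n nts nt \<and> hv t n ss s \<and> hv t n us u"
        using pre FF FF' by blast
      show "hold t (tA j l) (T j l) \<and> (\<forall>i<2. hold t (if i = 0 then nts ! j else ss ! j) (if i = 0 then nt j else s j) \<and>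
              hold t (us ! l) (u l))"
        using P j l by auto
    qed
  qed
qed

lemma ins_spec:
  assumes st: "stable F"
    and pre: "\<And>t. F t \<Longrightarrow> hold t z 0 \<and> hold t ob 1 \<and> (\<forall>j<n. \<forall>l<n. hold t (tA j l) (T j l)) \<and>
                (\<forall>j<n. hold t (vA j) (v j))"
  shows "hoare F (ins_gen n z ob tA vA) (\<lambda>tA' t. F t \<and> (\<forall>j<n. \<forall>l<n. hold t (tA' j l) (Tc n T v j l)))"
  unfolding ins_gen_def
  apply (rule hoare_bind[OF s1_spec[OF st, where T=T and v=v]])
   apply (use pre in blast)
  apply (rule hoare_bind[OF s2_spec[where T=T and v=v]])
    apply (intro stable_conj st stable_const stable_all stable_imp stable_at)
   apply (use pre in blast)
  apply (rule hoare_bind[OF s3_spec[where w="wc n T v"]])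
    apply (intro stable_conj st stable_const stable_all stable_imp stable_at)
   apply blast
  apply (rule hoare_bind[OF s4_spec[where w="wc n T v"]])
    apply (intro stable_conj st stable_const stable_all stable_imp stable_at)
   apply blast
  apply (rule hoare_bind[OF s5_spec[where e="ec n T v"]])
    apply (intro stable_conj st stable_const stable_all stable_imp stable_at)
   apply (use pre in \<open>simp add: ec_def\<close>)
  apply (rule hoare_bind[OF s6_spec[where s="sc n T v" and q="\<lambda>j. qinv (wc n T v j)"]])
    apply (intro stable_conj st stable_const stable_all stable_imp stable_at)
   apply (use pre in \<open>simp add: sc_def\<close>)
  apply (rule hoare_bind[OF s7_spec[where cv="cc n T v" and w="wc n T v"]])
    apply (intro stable_conj st stable_const stable_all stable_imp stable_at)
   apply (simp add: cc_def)
  apply (rule hoare_bind[OF s8_spec[where T=T and s="sc n T v"]])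
    apply (intro stable_conj st stable_const stable_all stable_imp stable_at)
   apply (use pre in \<open>simp add: sc_def\<close>)
  apply (rule hoare_bind[OF s9_spec[where T=T and nt="ntc n T v" and s="sc n T v" and u="uc n T v"]])
    apply (intro stable_conj st stable_const stable_all stable_imp stable_at)
   apply (use pre in \<open>simp add: sc_def ntc_def uc_def\<close>)
  apply (rule hoare_ret)
  apply (simp add: Tc_def)
  done


lemma fvals_char:
  assumes "\<And>i. i < k \<Longrightarrow> e i = (if w i = 0 then 0 else 1)"
  shows "fvals e 1 k = (if \<forall>i<k. w i = 0 then 1 else 0)"
  using assms
proof (induction k)
  case 0 thus ?case by simp
next
  case (Suc k)
  have IH: "fvals e 1 k = (if \<forall>i<k. w i = 0 then 1 else 0)" using Suc by auto
  have ek: "e k = (if w k = 0 then 0 else 1)" using Suc.prems by simp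
  show ?case using IH ek by (auto simp: less_Suc_eq)
qed

lemma Tc_newT:
  assumes vv: "\<And>l. l < n \<Longrightarrow> v' l = v l" and j: "j < n" and l: "l < n"
  shows "Tc n T v j l = newT n T v' j l"
proof -
  define w where "w = wvec n T v'"
  have wc: "wc n T v i = w i" if "i < n" for i
  proof -
    have "(\<Sum>j<n. (0 - v j * T j j) * T j i) = - (\<Sum>j<n. v' j * T j j * rowT T n j i)"
      using that vv by (simp add: rowT_def sum_negf[symmetric])
    thus ?thesis unfolding wc_def w_def wvec_def using vv that by simp
  qed
  have ec: "ec n T v i = (if w i = 0 then 0 else 1)" if "i < n" for i
    using wc[OF that] by (simp add: ec_def qinv_def)
  have fv: "fvals (ec n T v) 1 k = (if \<forall>i<k. w i = 0 then 1 else 0)" if "k \<le> n" for k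
    by (rule fvals_char) (use ec that in auto)
  have sc: "sc n T v i = sflag w i" if "i < n" for i
    using fv[of i] ec[OF that] that by (auto simp: sc_def sflag_def)
  have cc: "cc n T v = (\<Sum>j<n. sflag w j * qinv (w j))"
    unfolding cc_def using sc wc by simp
  have uc: "uc n T v l = cc n T v * w l" using wc[OF l] by (simp add: uc_def)
  have ntc: "ntc n T v j = - (\<Sum>l<n. sflag w l * T j l)" unfolding ntc_def using sc by simp
  have two: "(\<Sum>i<(2::nat). g i) = g 0 + g 1" for g :: "nat \<Rightarrow> 'a"
    by (simp add: numeral_2_eq_2)
  show ?thesis
    unfolding Tc_def newT_def Let_def w_def[symmetric] two using sc[OF j] uc cc ntc
    by (simp add: algebra_simps)
qed

fun main_gen :: "nat \<Rightarrow> nat \<Rightarrow> nat \<Rightarrow> nat \<Rightarrow> ('a::field, nat \<Rightarrow> nat \<Rightarrow> nat) gen" where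
  "main_gen n z ob 0 = gret (\<lambda>j l. z)"
| "main_gen n z ob (Suc r) = gbind (main_gen n z ob r) (\<lambda>tA. ins_gen n z ob tA (\<lambda>l. r * n + l))"

lemma main_spec:
  assumes st: "stable F"
    and pre: "\<And>t. F t \<Longrightarrow> hold t z 0 \<and> hold t ob 1 \<and> (\<forall>r'<rr. \<forall>l<n. hold t (r' * n + l) (A $$ (r', l)))"
  shows "hoare F (main_gen n z ob rr) (\<lambda>tA t. F t \<and> (\<forall>j<n. \<forall>l<n. hold t (tA j l) (Tk A n rr j l)))"
  using pre
proof (induction rr)
  case 0 show ?case unfolding main_gen.simps by (rule hoare_ret) (use 0 in auto)
next
  case (Suc r)
  have IH: "hoare F (main_gen n z ob r) (\<lambda>tA t. F t \<and> (\<forall>j<n. \<forall>l<n. hold t (tA j l) (Tk A n r j l)))"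
    using Suc.prems by (intro Suc.IH) auto
  show ?case unfolding main_gen.simps
  proof (rule hoare_bind[OF IH])
    fix tA
    let ?F = "\<lambda>t. F t \<and> (\<forall>j<n. \<forall>l<n. hold t (tA j l) (Tk A n r j l))"
    have st2: "stable ?F" by (intro stable_conj st stable_all stable_imp stable_at)
    show "hoare ?F (ins_gen n z ob tA (\<lambda>l. r * n + l))
          (\<lambda>tA t. F t \<and> (\<forall>j<n. \<forall>l<n. hold t (tA j l) (Tk A n (Suc r) j l)))"
    proof (rule hoare_conseq[OF ins_spec[OF st2, where T="Tk A n r" and v="\<lambda>l. A $$ (r, l)"]])
      fix t assume "?F t"
      thus "hold t z 0 \<and> hold t ob 1 \<and> (\<forall>j<n. \<forall>l<n. hold t (tA j l) (Tk A n r j l)) \<and>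
             (\<forall>j<n. hold t (r * n + j) (A $$ (r, j)))" using Suc.prems by auto
    next
      fix tA' t
      assume a: "?F t \<and> (\<forall>j<n. \<forall>l<n. hold t (tA' j l) (Tc n (Tk A n r) (\<lambda>l. A $$ (r, l)) j l))"
      have "Tc n (Tk A n r) (\<lambda>l. A $$ (r, l)) j l = Tk A n (Suc r) j l" if "j < n" "l < n" for j l
        using Tc_newT[of n "arow A n r" "\<lambda>l. A $$ (r, l)" j l "Tk A n r"] that by (simp add: arow_def)
      thus "F t \<and> (\<forall>j<n. \<forall>l<n. hold t (tA' j l) (Tk A n (Suc r) j l))" using a by auto
    qed
  qed
qed

definition pre_gen :: "nat \<Rightarrow> nat \<Rightarrow> ('a::field, nat \<Rightarrow> nat \<Rightarrow> nat) gen" where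
  "pre_gen m n = gbind (emit (Const 0)) (\<lambda>z. gbind (emit (Const 1)) (\<lambda>ob. main_gen n z ob m))"

lemma pre_spec:
  assumes st: "stable F" and pre: "\<And>t. F t \<Longrightarrow> (\<forall>r'<m. \<forall>l<n. hold t (r' * n + l) (A $$ (r', l)))"
  shows "hoare F (pre_gen m n) (\<lambda>tA t. F t \<and> (\<forall>j<n. \<forall>l<n. hold t (tA j l) (Tk A n m j l)))"
  unfolding pre_gen_def
proof (rule hoare_bind[OF emit_const[OF st]])
  fix z
  have st1: "stable (\<lambda>t. F t \<and> hold t z 0)" by (intro stable_conj st stable_at)
  show "hoare (\<lambda>t. F t \<and> hold t z 0) (gbind (emit (Const 1)) (\<lambda>ob. main_gen n z ob m))
      (\<lambda>tA t. F t \<and> (\<forall>j<n. \<forall>l<n. hold t (tA j l) (Tk A n m j l)))"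
  proof (rule hoare_bind[OF emit_const[OF st1]])
    fix ob
    have st2: "stable (\<lambda>t. (F t \<and> hold t z 0) \<and> hold t ob 1)" by (intro stable_conj st stable_at)
    show "hoare (\<lambda>t. (F t \<and> hold t z 0) \<and> hold t ob 1) (main_gen n z ob m)
      (\<lambda>tA t. F t \<and> (\<forall>j<n. \<forall>l<n. hold t (tA j l) (Tk A n m j l)))"
      by (rule hoare_conseq[OF main_spec[OF st2]]) (use pre in auto)
  qed
qed

lemma glen_cong: "glen g L \<Longrightarrow> L = L' \<Longrightarrow> glen g L'" by simp

lemma glen_ins: "glen (ins_gen n z ob tA vA :: ('a::field, nat \<Rightarrow> nat \<Rightarrow> nat) gen) (8 * n * n + 10 * n)"
proof -
  have g1: "glen (s1 n z tA vA :: ('a, nat list) gen) (n * (1 + 1))"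
    unfolding s1_def by (intro glen_mapg glen_bind glen_emit)
  have g2: "glen (s2 n tA vA ncs :: ('a, nat list) gen) (n * (2 * n))" for ncs
    unfolding s2_def by (intro glen_mapg glen_lcg)
  have g3: "glen (s3 n ws :: ('a, nat list) gen) (n * 1)" for ws
    unfolding s3_def by (intro glen_mapg glen_emit)
  have g4: "glen (s4 n ws qs :: ('a, nat list) gen) (n * 1)" for ws qs
    unfolding s4_def by (intro glen_mapg glen_emit)
  have g5: "glen (s5 n ob es :: ('a, nat list \<times> nat) gen) (2 * n)" for es
    unfolding s5_def by (rule glen_flagsg)
  have g6: "glen (s6 n z ss qs :: ('a, nat) gen) (2 * n)" for ss qs
    unfolding s6_def by (rule glen_lcg)
  have g7: "glen (s7 n c ws :: ('a, nat list) gen) (n * 1)" for c ws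
    unfolding s7_def by (intro glen_mapg glen_emit)
  have g8: "glen (s8 n z tA ss :: ('a, nat list) gen) (n * (2 * n + 1))" for ss
    unfolding s8_def by (intro glen_mapg glen_bind glen_lcg glen_emit)
  have g9: "glen (s9 n tA nts ss us :: ('a, nat list list) gen) (n * (n * (2 * 2)))" for nts ss us
    unfolding s9_def by (intro glen_mapg glen_lcg)
  have "glen (ins_gen n z ob tA vA :: ('a, nat \<Rightarrow> nat \<Rightarrow> nat) gen)
     (n * (1 + 1) + (n * (2 * n) + (n * 1 + (n * 1 + (2 * n + (2 * n + (n * 1 + (n * (2 * n + 1) +
       (n * (n * (2 * 2)) + 0)))))))))"
    unfolding ins_gen_def
    by (rule glen_bind[OF g1], rule glen_bind[OF g2], rule glen_bind[OF g3], rule glen_bind[OF g4],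
        rule glen_bind[OF g5], rule glen_bind[OF g6], rule glen_bind[OF g7], rule glen_bind[OF g8],
        rule glen_bind[OF g9], rule glen_ret)
  thus ?thesis by (rule glen_cong) (simp add: algebra_simps)
qed

lemma glen_main: "glen (main_gen n z ob r :: ('a::field, nat \<Rightarrow> nat \<Rightarrow> nat) gen) (r * (8 * n * n + 10 * n))"
proof (induction r)
  case 0 thus ?case by (simp add: glen_ret)
next
  case (Suc r)
  have "glen (main_gen n z ob (Suc r) :: ('a, nat \<Rightarrow> nat \<Rightarrow> nat) gen) (r * (8 * n * n + 10 * n) + (8 * n * n + 10 * n))"
    unfolding main_gen.simps by (rule glen_bind[OF Suc.IH glen_ins])
  thus ?case by (rule glen_cong) simp
qed

lemma glen_pre: "glen (pre_gen m n :: ('a::field, nat \<Rightarrow> nat \<Rightarrow> nat) gen) (1 + (1 + m * (8 * n * n + 10 * n)))"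
  unfolding pre_gen_def by (rule glen_bind[OF glen_emit], rule glen_bind[OF glen_emit], rule glen_main)

lemma concat_grid:
  "length (concat (map (\<lambda>i. map (g i) [0..<n]) [0..<m])) = m * n \<and>
   (\<forall>i<m. \<forall>j<n. concat (map (\<lambda>i. map (g i) [0..<n]) [0..<m]) ! (i * n + j) = g i j)"
proof (induction m)
  case 0 thus ?case by simp
next
  case (Suc m)
  have len: "length (concat (map (\<lambda>i. map (g i) [0..<n]) [0..<m])) = m * n" using Suc.IH by blast
  have "concat (map (\<lambda>i. map (g i) [0..<n]) [0..<Suc m]) ! (i * n + j) = g i j" if i: "i < Suc m" and j: "j < n" for i j
  proof (cases "i < m")
    case True
    have "i * n + j < m * n"
    proof -
      have "i * n + j < i * n + n" using j by simp
      also have "\<dots> = Suc i * n" by simp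
      also have "\<dots> \<le> m * n" using True by (intro mult_le_mono1) simp
      finally show ?thesis .
    qed
    thus ?thesis using Suc.IH True j len by (simp add: nth_append)
  next
    case False
    hence "i = m" using i by simp
    thus ?thesis using len j by (simp add: nth_append)
  qed
  thus ?case using len by simp
qed

lemma entries_carrier:
  assumes "A \<in> carrier_mat m n"
  shows "length (entries A) = m * n" "\<And>i j. i < m \<Longrightarrow> j < n \<Longrightarrow> entries A ! (i * n + j) = A $$ (i, j)"
  using assms concat_grid[of "\<lambda>i j. A $$ (i, j)" n m] unfolding entries_def by auto

definition recall_code :: "nat \<Rightarrow> (nat \<Rightarrow> nat \<Rightarrow> nat) \<Rightarrow> 'a instr list" where
  "recall_code n tA = concat (map (\<lambda>j. map (\<lambda>l. Recall (tA j l)) [0..<n]) [0..<n])"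

lemma run_recall:
  "(\<forall>x\<in>set c. \<exists>a. x = Recall a \<and> a < length t) \<Longrightarrow> run_abs c t = t @ map (\<lambda>x. eval_abs x t) c"
proof (induction c arbitrary: t)
  case Nil thus ?case by simp
next
  case (Cons x c)
  have h: "\<forall>y\<in>set c. \<exists>a. y = Recall a \<and> a < length (t @ [eval_abs x t])" using Cons.prems by fastforce
  have e: "eval_abs y (t @ [eval_abs x t]) = eval_abs y t" if "y \<in> set c" for y
    using Cons.prems that by (auto simp: nth_append)
  show ?case using Cons.IH[OF h] e by simp
qed

lemma okabs_recall: "(\<forall>x\<in>set c. \<exists>a. x = Recall a \<and> a < p) \<Longrightarrow> okabs p c"
proof -
  assume h: "\<forall>x\<in>set c. \<exists>a. x = Recall a \<and> a < p"
  show ?thesis unfolding okabs_def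
  proof (intro allI impI ballI)
    fix i a assume i: "i < length c" and a: "a \<in> offsets (c ! i)"
    from h i obtain b where "c ! i = Recall b" "b < p" using nth_mem by blast
    thus "a < p + i" using a by simp
  qed
qed

definition prog_abs :: "nat \<Rightarrow> nat \<Rightarrow> 'a::field instr list" where
  "prog_abs m n = snd (pre_gen m n (m * n)) @ recall_code n (fst (pre_gen m n (m * n) :: (nat \<Rightarrow> nat \<Rightarrow> nat) \<times> 'a instr list))"

lemma pre_run:
  assumes A: "(A :: 'a::field mat) \<in> carrier_mat m n"
  shows "okabs (m * n) (snd (pre_gen m n (m * n)) :: 'a::field instr list) \<and>
    (\<forall>j<n. \<forall>l<n. hold (run_abs (snd (pre_gen m n (m * n))) (entries A)) (fst (pre_gen m n (m * n) :: (nat \<Rightarrow> nat \<Rightarrow> nat) \<times> 'a instr list) j l) (Tk A n m j l))"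
proof -
  let ?F = "\<lambda>t. \<forall>r'<m. \<forall>l<n. hold t (r' * n + l) (A $$ (r', l))"
  have st: "stable ?F" by (intro stable_all stable_imp stable_at)
  have h: "hoare ?F (pre_gen m n) (\<lambda>tA t. ?F t \<and> (\<forall>j<n. \<forall>l<n. hold t (tA j l) (Tk A n m j l)))"
    by (rule pre_spec[OF st]) simp
  have F0: "?F (entries A)"
  proof (intro allI impI)
    fix r l assume r: "r < m" and l: "l < n"
    have "r * n + l < r * n + n" using l by simp
    also have "\<dots> = Suc r * n" by simp
    also have "\<dots> \<le> m * n" using r by (intro mult_le_mono1) simp
    finally have "r * n + l < m * n" .
    thus "hold (entries A) (r * n + l) (A $$ (r, l))"
      using entries_carrier[OF A] r l by (simp add: hold_def)
  qed
  have len: "length (entries A) = m * n" using entries_carrier[OF A] by simp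
  have "case pre_gen m n (length (entries A)) of (r, c) \<Rightarrow> okabs (length (entries A)) c \<and>
     ?F (run_abs c (entries A)) \<and> (\<forall>j<n. \<forall>l<n. hold (run_abs c (entries A)) (r j l) (Tk A n m j l))"
    by (rule mp[OF spec[OF h[unfolded hoare_def], of "entries A"] F0])
  thus ?thesis unfolding len by (simp add: case_prod_beta)
qed

section \<open>Constructibility of all tape cells\<close>

lemma run_abs_snoc: "run_abs (c @ [x]) t = run_abs c t @ [eval_abs x (run_abs c t)]"
  by (simp add: run_abs_append)

lemma slp_constructible:
  "okabs (m * n) (c :: 'a::field instr list) \<Longrightarrow> idx < m * n + length c \<Longrightarrow>
   \<exists>f. constructible m n f \<and> (\<forall>A\<in>carrier_mat m n. f A = run_abs c (entries A) ! idx)"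
proof (induction c arbitrary: idx rule: rev_induct)
  case Nil
  hence idx: "idx < m * n" by simp
  hence n0: "0 < n" by (cases n) auto
  define i where "i = idx div n"
  define j where "j = idx mod n"
  have j: "j < n" using n0 by (simp add: j_def)
  have i: "i < m" using idx n0 unfolding i_def by (simp add: less_mult_imp_div_less)
  have e: "idx = i * n + j" unfolding i_def j_def by simp
  show ?case
  proof (intro exI conjI)
    show "constructible m n (\<lambda>A. A $$ (i, j))" by (rule cf_entry[OF i j])
    show "\<forall>A\<in>carrier_mat m n. A $$ (i, j) = run_abs ([] :: 'a instr list) (entries A) ! idx"
    proof
      fix A :: "'a mat" assume A: "A \<in> carrier_mat m n"
      show "A $$ (i, j) = run_abs ([] :: 'a instr list) (entries A) ! idx" using entries_carrier(2)[OF A i j] e by simp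
    qed
  qed
next
  case (snoc x c)
  have ok: "okabs (m * n) c" and ox: "\<forall>a\<in>offsets x. a < m * n + length c"
    using snoc.prems(1) by (auto simp: okabs_append okabs_Cons)
  have len: "length (run_abs c (entries A)) = m * n + length c" if "A \<in> carrier_mat m n" for A
    using entries_carrier[OF that] by simp
  show ?case
  proof (cases "idx < m * n + length c")
    case True
    from snoc.IH[OF ok True] obtain f where f: "constructible m n f"
      and fe: "\<forall>A\<in>carrier_mat m n. f A = run_abs c (entries A) ! idx" by blast
    show ?thesis using f fe True len by (intro exI[of _ f]) (auto simp: run_abs_snoc nth_append)
  next
    case False
    hence idx: "idx = m * n + length c" using snoc.prems(2) by simp
    have new: "run_abs (c @ [x]) (entries A) ! idx = eval_abs x (run_abs c (entries A))"
      if "A \<in> carrier_mat m n" for A using len[OF that] idx by (simp add: run_abs_snoc nth_append)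
    have cell: "\<exists>f. constructible m n f \<and> (\<forall>A\<in>carrier_mat m n. f A = run_abs c (entries A) ! a)"
      if "a \<in> offsets x" for a using snoc.IH[OF ok] ox that by blast
    have "\<exists>f. constructible m n f \<and> (\<forall>A\<in>carrier_mat m n. f A = eval_abs x (run_abs c (entries A)))"
    proof (cases x)
      case (Add a b)
      obtain fa fb where "constructible m n fa" "\<forall>A\<in>carrier_mat m n. fa A = run_abs c (entries A) ! a"
        "constructible m n fb" "\<forall>A\<in>carrier_mat m n. fb A = run_abs c (entries A) ! b"
        using cell[of a] cell[of b] Add by auto
      thus ?thesis using Add by (intro exI[of _ "\<lambda>A. fa A + fb A"]) (auto intro: cf_add)
    next
      case (Sub a b)
      obtain fa fb where "constructible m n fa" "\<forall>A\<in>carrier_mat m n. fa A = run_abs c (entries A) ! a"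
        "constructible m n fb" "\<forall>A\<in>carrier_mat m n. fb A = run_abs c (entries A) ! b"
        using cell[of a] cell[of b] Sub by auto
      thus ?thesis using Sub by (intro exI[of _ "\<lambda>A. fa A - fb A"]) (auto intro: cf_sub)
    next
      case (Mul a b)
      obtain fa fb where "constructible m n fa" "\<forall>A\<in>carrier_mat m n. fa A = run_abs c (entries A) ! a"
        "constructible m n fb" "\<forall>A\<in>carrier_mat m n. fb A = run_abs c (entries A) ! b"
        using cell[of a] cell[of b] Mul by auto
      thus ?thesis using Mul by (intro exI[of _ "\<lambda>A. fa A * fb A"]) (auto intro: cf_mul)
    next
      case (QInv a)
      obtain fa where "constructible m n fa" "\<forall>A\<in>carrier_mat m n. fa A = run_abs c (entries A) ! a"
        using cell[of a] QInv by auto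
      thus ?thesis using QInv by (intro exI[of _ "\<lambda>A. qinv (fa A)"]) (auto intro: cf_qinv)
    next
      case (Const d)
      thus ?thesis by (intro exI[of _ "\<lambda>A. d"]) (auto intro: cf_const)
    next
      case (Recall a)
      obtain fa where "constructible m n fa" "\<forall>A\<in>carrier_mat m n. fa A = run_abs c (entries A) ! a"
        using cell[of a] Recall by auto
      thus ?thesis using Recall by (intro exI[of _ fa]) auto
    qed
    thus ?thesis using new by auto
  qed
qed

lemma len_bound:
  assumes m: "1 \<le> m" and n: "1 \<le> (n::nat)"
  shows "1 + (1 + m * (8 * n * n + 10 * n)) + n * n \<le> 20 * (m * n ^ 2 + n ^ 3)"
proof -
  have a: "1 \<le> m * n * n" using m n by simp
  have b: "m * n \<le> m * n * n" using n by simp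
  have c: "n * n \<le> n * n * n" using n by simp
  have "1 + (1 + m * (8 * n * n + 10 * n)) + n * n = 2 + 8 * (m * n * n) + 10 * (m * n) + n * n"
    by (simp add: algebra_simps)
  also have "\<dots> \<le> 2 * (m * n * n) + 8 * (m * n * n) + 10 * (m * n * n) + n * n * n"
    using a b c by linarith
  also have "\<dots> \<le> 20 * (m * n ^ 2 + n ^ 3)" by (simp add: power2_eq_square power3_eq_cube algebra_simps)
  finally show ?thesis .
qed

theorem proposition2p1:
  "\<exists>C::nat. \<forall>m n. 1 \<le> m \<longrightarrow> 1 \<le> n \<longrightarrow>
     (\<exists>prog :: 'a::field instr list.
        valid_slp (m * n) prog \<and>
        n ^ 2 \<le> length prog \<and>
        length prog \<le> C * (m * n ^ 2 + n ^ 3) \<and>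
        (\<forall>A \<in> carrier_mat m n. slp_output prog (n ^ 2) (entries A) = entries (trref A)))
     \<and> (\<forall>i < n. \<forall>j < n. \<exists>f :: 'a mat \<Rightarrow> 'a. constructible m n f \<and>
           (\<forall>A \<in> carrier_mat m n. f A = trref A $$ (i, j)))"
proof (rule exI[of _ 20], intro allI impI, rule conjI)
  fix m n :: nat assume m: "1 \<le> m" and n: "1 \<le> n"
  define c1 where "c1 = (snd (pre_gen m n (m * n)) :: 'a instr list)"
  define tA where "tA = (fst (pre_gen m n (m * n) :: (nat \<Rightarrow> nat \<Rightarrow> nat) \<times> 'a instr list))"
  define rc where "rc = (recall_code n tA :: 'a instr list)"
  have pa: "prog_abs m n = c1 @ rc" unfolding prog_abs_def c1_def tA_def rc_def by simp
  have A0: "(0\<^sub>m m n :: 'a mat) \<in> carrier_mat m n" by simp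
  have ok1: "okabs (m * n) c1" using pre_run[OF A0] unfolding c1_def by blast
  have bnd: "tA j l < m * n + length c1" if "j < n" "l < n" for j l
    using pre_run[OF A0] that entries_carrier(1)[OF A0] unfolding c1_def tA_def hold_def by auto
  have rcset: "\<forall>x\<in>set rc. \<exists>a. x = Recall a \<and> a < m * n + length c1"
    unfolding rc_def recall_code_def using bnd by auto
  have ok2: "okabs (m * n + length c1) rc" by (rule okabs_recall[OF rcset])
  have ok: "okabs (m * n) (prog_abs m n :: 'a instr list)" unfolding pa okabs_append using ok1 ok2 by simp
  have lc1: "length c1 = 1 + (1 + m * (8 * n * n + 10 * n))"
    using glen_pre[where 'a='a, of m n] unfolding glen_def c1_def by simp
  have lrc: "length rc = n * n" unfolding rc_def recall_code_def by (simp add: length_concat sum_list_triv comp_def)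
  have len: "length (prog_abs m n :: 'a instr list) = 1 + (1 + m * (8 * n * n + 10 * n)) + n * n"
    unfolding pa using lc1 lrc by simp
  define prog where "prog = conv_prog (m * n) (prog_abs m n :: 'a instr list)"
  have main: "\<forall>A \<in> carrier_mat m n. slp_output prog (n ^ 2) (entries A) = entries (trref A)"
  proof
    fix A :: "'a mat" assume A: "A \<in> carrier_mat m n"
    have le: "length (entries A) = m * n" using entries_carrier(1)[OF A] .
    define t1 where "t1 = run_abs c1 (entries A)"
    have h: "\<forall>j<n. \<forall>l<n. hold t1 (tA j l) (Tk A n m j l)"
      using pre_run[OF A] unfolding t1_def c1_def tA_def by blast
    have lt1: "length t1 = m * n + length c1" unfolding t1_def using le by simp
    have run: "run_slp prog (entries A) = run_abs (prog_abs m n) (entries A)"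
      unfolding prog_def using run_conv[of "entries A" "prog_abs m n :: 'a instr list"] ok le by simp
    also have "\<dots> = run_abs rc t1" unfolding pa t1_def by (simp add: run_abs_append)
    also have "\<dots> = t1 @ map (\<lambda>x. eval_abs x t1) rc" by (rule run_recall) (use rcset lt1 in simp)
    finally have r: "run_slp prog (entries A) = t1 @ map (\<lambda>x. eval_abs x t1) rc" .
    have vals: "map (\<lambda>x. eval_abs x t1) rc = entries (trref A)"
    proof -
      have "map (\<lambda>x. eval_abs x t1) rc = concat (map (\<lambda>j. map (\<lambda>l. t1 ! tA j l) [0..<n]) [0..<n])"
        unfolding rc_def recall_code_def by (simp add: map_concat comp_def)
      also have "\<dots> = concat (map (\<lambda>j. map (\<lambda>l. trref A $$ (j, l)) [0..<n]) [0..<n])"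
        using h Tk_trref[OF A] by (intro arg_cong[where f = concat] map_cong refl) (auto simp: hold_def)
      also have "\<dots> = entries (trref A)" using trref_carrier[OF A] unfolding entries_def by simp
      finally show ?thesis .
    qed
    have "length (map (\<lambda>x. eval_abs x t1) rc) = n ^ 2" using lrc by (simp add: power2_eq_square)
    thus "slp_output prog (n ^ 2) (entries A) = entries (trref A)"
      unfolding slp_output_def Let_def r using vals by simp
  qed
  show "\<exists>prog :: 'a instr list. valid_slp (m * n) prog \<and> n ^ 2 \<le> length prog \<and>
        length prog \<le> 20 * (m * n ^ 2 + n ^ 3) \<and>
        (\<forall>A \<in> carrier_mat m n. slp_output prog (n ^ 2) (entries A) = entries (trref A))"
  proof (intro exI[of _ prog] conjI)
    show "valid_slp (m * n) prog" unfolding prog_def by (rule valid_conv[OF ok])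
    show "n ^ 2 \<le> length prog" unfolding prog_def using len by (simp add: power2_eq_square)
    show "length prog \<le> 20 * (m * n ^ 2 + n ^ 3)" unfolding prog_def using len len_bound[OF m n] by simp
  qed (rule main)
  show "\<forall>i < n. \<forall>j < n. \<exists>f :: 'a mat \<Rightarrow> 'a. constructible m n f \<and>
           (\<forall>A \<in> carrier_mat m n. f A = trref A $$ (i, j))"
  proof (intro allI impI)
    fix i j assume i: "i < n" and j: "j < n"
    have "tA i j < m * n + length (prog_abs m n :: 'a instr list)" using bnd[OF i j] pa by simp
    from slp_constructible[OF ok this] obtain f :: "'a mat \<Rightarrow> 'a" where f: "constructible m n f"
      and fe: "\<forall>A\<in>carrier_mat m n. f A = run_abs (prog_abs m n :: 'a instr list) (entries A) ! tA i j" by blast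
    have "f A = trref A $$ (i, j)" if A: "A \<in> carrier_mat m n" for A
    proof -
      have le: "length (entries A) = m * n" using entries_carrier(1)[OF A] .
      have h: "hold (run_abs c1 (entries A)) (tA i j) (Tk A n m i j)"
        using pre_run[OF A] i j unfolding c1_def tA_def by blast
      have "f A = run_abs rc (run_abs c1 (entries A)) ! tA i j" using fe A unfolding pa by (simp add: run_abs_append)
      also have "\<dots> = run_abs c1 (entries A) ! tA i j" using h by (simp add: hold_def run_abs_nth)
      also have "\<dots> = trref A $$ (i, j)" using h Tk_trref[OF A i j] by (simp add: hold_def)
      finally show ?thesis .
    qed
    thus "\<exists>f :: 'a mat \<Rightarrow> 'a. constructible m n f \<and> (\<forall>A \<in> carrier_mat m n. f A = trref A $$ (i, j))"
      using f by blast
  qed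
qed

end
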